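(* Let $\Pi$ be a $\rho$-local problem, let $g\ge1$ and $T\ge0$ be integers, and let $G$ be a graph of Euler genus at most $g$. Let $X=\{u\in V(G): G[N^T[u]]\text{ is not planar}\}$. Then every connected component of $G[N^{2\rho}[X]]$ has weak diameter in $G$ strictly less than $g\,(2T+4\rho+1)$. In particular, the class of graphs of Euler genus at most $g$ is $T$-locally $\delta$-nice with respect to the class of planar graphs and $\Pi$ for some $\delta<g(2T+4\rho+1)$.
   Context: $N^t[S]$ is the set of vertices at distance at most $t$ from $S$ in $G$. The weak diameter in $G$ of $Z\subseteq V(G)$ is the maximum $G$-distance between two vertices of $Z$. Euler genus of a graph: minimum Euler genus of a surface on which it embeds. A class $\mathscr{D}$ is $T$-locally $\delta$-nice w.r.t. a class $\mathscr{C}$ and a $\rho$-local problem if for every $G\in\mathscr{D}$, with $X=\{u: G[N^T[u]]\notin\mathscr{C}\}$, every connected component of $G[N^{2\rho}[X]]$ has weak diameter in $G$ at most $\delta$. ($\rho$ is a non-negative integer; the problem itself plays no role beyond $\rho$.) *)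

theory Defs
  imports Main "HOL-Library.Extended_Nat"
begin

definition sgraph :: "'a set \<Rightarrow> ('a \<times> 'a) set \<Rightarrow> bool" where
  "sgraph V E \<longleftrightarrow> finite V \<and> E \<subseteq> V \<times> V \<and> sym E \<and> (\<forall>x. (x, x) \<notin> E)"

definition gdist :: "('a \<times> 'a) set \<Rightarrow> 'a \<Rightarrow> 'a \<Rightarrow> enat" where
  "gdist E u v = (if \<exists>n. (u, v) \<in> E ^^ n then enat (LEAST n. (u, v) \<in> E ^^ n) else \<infinity>)"

definition nbhd :: "'a set \<Rightarrow> ('a \<times> 'a) set \<Rightarrow> nat \<Rightarrow> 'a set \<Rightarrow> 'a set" where
  "nbhd V E t S = {v \<in> V. \<exists>u\<in>S. gdist E u v \<le> enat t}"

definition induced :: "('a \<times> 'a) set \<Rightarrow> 'a set \<Rightarrow> ('a \<times> 'a) set" where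
  "induced E S = E \<inter> (S \<times> S)"

definition components :: "'a set \<Rightarrow> ('a \<times> 'a) set \<Rightarrow> 'a set set" where
  "components V E = {C. \<exists>v\<in>V. C = {w \<in> V. (v, w) \<in> E\<^sup>*}}"

definition weak_diam :: "('a \<times> 'a) set \<Rightarrow> 'a set \<Rightarrow> enat" where
  "weak_diam E Z = Sup {gdist E u v | u v. u \<in> Z \<and> v \<in> Z}"

text \<open>Surfaces are not available in Isabelle/HOL, so embeddings are encoded
combinatorially by generalized maps: a finite set of flags with three
fixed-point-free involutions a0, a1, a2, where a0 and a2 commute and
a0 a2 is fixed-point-free. Vertices, edges, faces and surface components are
the orbits of <a1,a2>, <a0,a2>, <a0,a1> and <a0,a1,a2> respectively.\<close>

definition orbit :: "('b \<Rightarrow> 'b) list \<Rightarrow> 'b \<Rightarrow> 'b set" where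
  "orbit fs x = {y. (x, y) \<in> {(z, f z) | z f. f \<in> set fs}\<^sup>*}"

definition orbits :: "'b set \<Rightarrow> ('b \<Rightarrow> 'b) list \<Rightarrow> 'b set set" where
  "orbits \<Phi> fs = orbit fs ` \<Phi>"

definition invol_on :: "'b set \<Rightarrow> ('b \<Rightarrow> 'b) \<Rightarrow> bool" where
  "invol_on \<Phi> f \<longleftrightarrow> (\<forall>x\<in>\<Phi>. f x \<in> \<Phi> \<and> f x \<noteq> x \<and> f (f x) = x)"

definition gem :: "nat set \<Rightarrow> (nat \<Rightarrow> nat) \<Rightarrow> (nat \<Rightarrow> nat) \<Rightarrow> (nat \<Rightarrow> nat) \<Rightarrow> bool" where
  "gem \<Phi> a0 a1 a2 \<longleftrightarrow> finite \<Phi> \<and> invol_on \<Phi> a0 \<and> invol_on \<Phi> a1 \<and> invol_on \<Phi> a2 \<and>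
     (\<forall>x\<in>\<Phi>. a0 (a2 x) = a2 (a0 x) \<and> a0 x \<noteq> a2 x)"

text \<open>The gem, via the vertex labelling nu, is an embedding of the graph (V,E)
(isolated vertices, which carry no flags, are placed anywhere): vertex orbits
correspond bijectively to the non-isolated vertices and edge orbits
bijectively to the edges.\<close>

definition gem_embeds :: "'a set \<Rightarrow> ('a \<times> 'a) set \<Rightarrow> nat set \<Rightarrow> (nat \<Rightarrow> nat) \<Rightarrow> (nat \<Rightarrow> nat)
    \<Rightarrow> (nat \<Rightarrow> nat) \<Rightarrow> (nat \<Rightarrow> 'a) \<Rightarrow> bool" where
  "gem_embeds V E \<Phi> a0 a1 a2 \<nu> \<longleftrightarrow> gem \<Phi> a0 a1 a2 \<and>
     (\<forall>x\<in>\<Phi>. \<nu> x \<in> V \<and> \<nu> (a1 x) = \<nu> x \<and> \<nu> (a2 x) = \<nu> x \<and> (\<nu> x, \<nu> (a0 x)) \<in> E) \<and>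
     (\<forall>x\<in>\<Phi>. \<forall>y\<in>\<Phi>. \<nu> x = \<nu> y \<longrightarrow> y \<in> orbit [a1, a2] x) \<and>
     (\<forall>x\<in>\<Phi>. \<forall>y\<in>\<Phi>. {\<nu> x, \<nu> (a0 x)} = {\<nu> y, \<nu> (a0 y)} \<longrightarrow> y \<in> orbit [a0, a2] x) \<and>
     (\<forall>(u, v)\<in>E. \<exists>x\<in>\<Phi>. \<nu> x = u \<and> \<nu> (a0 x) = v)"

text \<open>Euler genus of the (possibly disconnected) surface described by a gem:
sum over its components of 2 - (v - e + f).\<close>
definition gem_euler_genus :: "nat set \<Rightarrow> (nat \<Rightarrow> nat) \<Rightarrow> (nat \<Rightarrow> nat) \<Rightarrow> (nat \<Rightarrow> nat) \<Rightarrow> int" where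
  "gem_euler_genus \<Phi> a0 a1 a2 =
     2 * int (card (orbits \<Phi> [a0, a1, a2])) - int (card (orbits \<Phi> [a1, a2]))
       + int (card (orbits \<Phi> [a0, a2])) - int (card (orbits \<Phi> [a0, a1]))"

definition euler_genus_le :: "'a set \<Rightarrow> ('a \<times> 'a) set \<Rightarrow> nat \<Rightarrow> bool" where
  "euler_genus_le V E k \<longleftrightarrow>
     (\<exists>\<Phi> a0 a1 a2 \<nu>. gem_embeds V E \<Phi> a0 a1 a2 \<nu> \<and> gem_euler_genus \<Phi> a0 a1 a2 \<le> int k)"

definition planar :: "'a set \<Rightarrow> ('a \<times> 'a) set \<Rightarrow> bool" where
  "planar V E \<longleftrightarrow> euler_genus_le V E 0"

definition locally_nice ::
  "nat \<Rightarrow> nat \<Rightarrow> nat \<Rightarrow> ('a set \<times> ('a \<times> 'a) set) set \<Rightarrow> ('a set \<times> ('a \<times> 'a) set) set \<Rightarrow> bool" where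
  "locally_nice T \<delta> \<rho> D C \<longleftrightarrow>
     (\<forall>(V, E)\<in>D.
        let X = {u \<in> V. (nbhd V E T {u}, induced E (nbhd V E T {u})) \<notin> C};
            N = nbhd V E (2 * \<rho>) X
        in \<forall>K \<in> components N (induced E N). weak_diam E K \<le> enat \<delta>)"

end

theory Submission
  imports Defs
begin

definition stp :: "('b \<Rightarrow> 'b) list \<Rightarrow> ('b \<times> 'b) set" where
  "stp fs = {(z, f z) | z f. f \<in> set fs}"

lemma orbit_stp: "orbit fs x = {y. (x, y) \<in> (stp fs)\<^sup>*}"
  by (simp add: orbit_def stp_def)

lemma orbit_self[simp]: "x \<in> orbit fs x"
  by (simp add: orbit_stp)

lemma orbit_step: "f \<in> set fs \<Longrightarrow> y \<in> orbit fs x \<Longrightarrow> f y \<in> orbit fs x"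
  unfolding orbit_stp stp_def
  by (auto intro: rtrancl_into_rtrancl)

lemma orbit_trans: "y \<in> orbit fs x \<Longrightarrow> z \<in> orbit fs y \<Longrightarrow> z \<in> orbit fs x"
  unfolding orbit_stp by auto

lemma orbit_sub:
  assumes "x \<in> S" "\<And>f w. f \<in> set fs \<Longrightarrow> w \<in> S \<Longrightarrow> f w \<in> S"
  shows "orbit fs x \<subseteq> S"
proof
  fix y assume "y \<in> orbit fs x"
  then have "(x, y) \<in> (stp fs)\<^sup>*" by (simp add: orbit_stp)
  then show "y \<in> S"
    by (induction rule: rtrancl_induct) (auto simp: stp_def assms)
qed

lemma orbit_mono: "set fs \<subseteq> set gs \<Longrightarrow> orbit fs x \<subseteq> orbit gs x"
  by (rule orbit_sub) (auto intro: orbit_step)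

definition closed_inv :: "'b set \<Rightarrow> ('b \<Rightarrow> 'b) list \<Rightarrow> bool" where
  "closed_inv \<Phi> fs \<longleftrightarrow> (\<forall>f\<in>set fs. \<forall>z\<in>\<Phi>. f z \<in> \<Phi> \<and> f (f z) = z)"

lemma orbit_in: "closed_inv \<Phi> fs \<Longrightarrow> x \<in> \<Phi> \<Longrightarrow> orbit fs x \<subseteq> \<Phi>"
  by (rule orbit_sub) (auto simp: closed_inv_def)

lemma orbit_sym:
  assumes "closed_inv \<Phi> fs" "x \<in> \<Phi>" "y \<in> orbit fs x"
  shows "x \<in> orbit fs y"
proof -
  have "(x, y) \<in> (stp fs)\<^sup>*" using assms(3) by (simp add: orbit_stp)
  then show ?thesis
  proof (induction rule: rtrancl_induct)
    case base then show ?case by simp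
  next
    case (step y z)
    have yP: "y \<in> \<Phi>" using orbit_in[OF assms(1,2)] step(1) by (auto simp: orbit_stp)
    from step(2) obtain f where f: "f \<in> set fs" "z = f y" by (auto simp: stp_def)
    then have "f z = y" using assms(1) yP by (auto simp: closed_inv_def)
    then have "y \<in> orbit fs z" using orbit_step[OF f(1) orbit_self[of z fs]] by simp
    then show ?case using step(3) orbit_trans by metis
  qed
qed

lemma orbit_eq:
  assumes "closed_inv \<Phi> fs" "x \<in> \<Phi>" "y \<in> orbit fs x"
  shows "orbit fs y = orbit fs x"
proof
  show "orbit fs y \<subseteq> orbit fs x" using assms(3) orbit_trans by fast
  show "orbit fs x \<subseteq> orbit fs y" using orbit_sym[OF assms] orbit_trans by fast
qed

lemma orbit_agree:
  assumes "\<And>w f'. w \<in> orbit fs x \<Longrightarrow> f' \<in> set gs \<Longrightarrow> \<exists>f\<in>set fs. f' w = f w"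
      and "\<And>w f. w \<in> orbit fs x \<Longrightarrow> f \<in> set fs \<Longrightarrow> \<exists>f'\<in>set gs. f' w = f w"
  shows "orbit gs x = orbit fs x"
proof
  show "orbit gs x \<subseteq> orbit fs x"
  proof (rule orbit_sub)
    fix f' w assume "f' \<in> set gs" "w \<in> orbit fs x"
    then obtain f where "f \<in> set fs" "f' w = f w" using assms(1) by blast
    then show "f' w \<in> orbit fs x" using orbit_step \<open>w \<in> orbit fs x\<close> by metis
  qed simp
next
  show "orbit fs x \<subseteq> orbit gs x"
  proof
    fix y assume "y \<in> orbit fs x"
    then have "(x, y) \<in> (stp fs)\<^sup>*" by (simp add: orbit_stp)
    then show "y \<in> orbit gs x"
    proof (induction rule: rtrancl_induct)
      case base then show ?case by simp
    next
      case (step y z)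
      from step(2) obtain f where f: "f \<in> set fs" "z = f y" by (auto simp: stp_def)
      have "y \<in> orbit fs x" using step(1) by (simp add: orbit_stp)
      then obtain f' where "f' \<in> set gs" "f' y = f y" using assms(2) f(1) by blast
      then show ?case using orbit_step step(3) f(2) by metis
    qed
  qed
qed

lemma even_card_invol:
  assumes "finite A" "\<And>w. w \<in> A \<Longrightarrow> f w \<in> A \<and> f w \<noteq> w \<and> f (f w) = w"
  shows "even (card A)"
  using assms
proof (induction "card A" arbitrary: A rule: less_induct)
  case less
  show ?case
  proof (cases "A = {}")
    case True then show ?thesis by simp
  next
    case False
    then obtain w where w: "w \<in> A" by blast
    let ?B = "A - {w, f w}"
    have fw: "f w \<in> A" "f w \<noteq> w" using less.prems(2) w by auto
    have cB: "card ?B = card A - 2" using fw w less.prems(1)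
      by (simp add: card_Diff_subset)
    have cA: "card A \<ge> 2"
    proof -
      have "{w, f w} \<subseteq> A" using fw w by auto
      then have "card {w, f w} \<le> card A" using less.prems(1) card_mono by blast
      then show ?thesis using fw by simp
    qed
    have "even (card ?B)"
    proof (rule less.hyps)
      show "card ?B < card A" using cB cA by simp
      show "finite ?B" using less.prems(1) by simp
      fix v assume v: "v \<in> ?B"
      then have "f v \<in> A \<and> f v \<noteq> v \<and> f (f v) = v" using less.prems(2) by auto
      moreover have "f v \<noteq> w" using v less.prems(2) w by (metis DiffE insertCI)
      moreover have "f v \<noteq> f w" using v less.prems(2) w by (metis DiffE insertCI)
      ultimately show "f v \<in> ?B \<and> f v \<noteq> v \<and> f (f v) = v" by auto
    qed
    moreover have "card A = card ?B + 2" using cB cA by simp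
    ultimately show ?thesis by simp
  qed
qed

lemma card_img_le_img:
  assumes "finite Q" "\<And>a b. a \<in> Q \<Longrightarrow> b \<in> Q \<Longrightarrow> h a = h b \<Longrightarrow> k a = k b"
  shows "card (k ` Q) \<le> card (h ` Q)"
proof -
  have "k ` Q = (\<lambda>r. k (SOME a. a \<in> Q \<and> h a = r)) ` (h ` Q)"
  proof (rule set_eqI, rule iffI)
    fix z assume "z \<in> k ` Q"
    then obtain a where a: "a \<in> Q" "z = k a" by auto
    have ex: "\<exists>b. b \<in> Q \<and> h b = h a" using a by blast
    have "(SOME b. b \<in> Q \<and> h b = h a) \<in> Q \<and> h (SOME b. b \<in> Q \<and> h b = h a) = h a"
      using someI_ex[OF ex] .
    then have "k (SOME b. b \<in> Q \<and> h b = h a) = k a" using assms(2) a(1) by blast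
    then show "z \<in> (\<lambda>r. k (SOME a. a \<in> Q \<and> h a = r)) ` (h ` Q)" using a by force
  next
    fix z assume "z \<in> (\<lambda>r. k (SOME a. a \<in> Q \<and> h a = r)) ` (h ` Q)"
    then obtain a where a: "a \<in> Q" "z = k (SOME b. b \<in> Q \<and> h b = h a)" by auto
    have ex: "\<exists>b. b \<in> Q \<and> h b = h a" using a by blast
    have "(SOME b. b \<in> Q \<and> h b = h a) \<in> Q" using someI_ex[OF ex] by blast
    then show "z \<in> k ` Q" using a by blast
  qed
  then show ?thesis using card_image_le assms(1) by (metis finite_imageI)
qed

lemma card_diff_common:
  assumes "finite A" "finite B" "U \<subseteq> A" "U \<subseteq> B"
  shows "int (card B) - int (card A) = int (card (B - U)) - int (card (A - U))"
proof -
  have "card (B - U) = card B - card U" using assms by (simp add: card_Diff_subset finite_subset)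
  moreover have "card (A - U) = card A - card U" using assms by (simp add: card_Diff_subset finite_subset)
  moreover have "card U \<le> card A" "card U \<le> card B" using assms card_mono by auto
  ultimately show ?thesis by simp
qed

locale del =
  fixes \<Phi> :: "nat set" and a0 a1 a2 :: "nat \<Rightarrow> nat" and x :: nat
  assumes gm: "gem \<Phi> a0 a1 a2" and xin: "x \<in> \<Phi>"
    and H0: "\<And>y. y \<in> \<Phi> \<Longrightarrow> a0 y \<notin> orbit [a1, a2] y"
begin

definition "D = {x, a0 x, a2 x, a0 (a2 x)}"
definition "b1 y = (if a1 y \<in> D then a1 (a2 (a1 y)) else a1 y)"
definition "\<Psi> = \<Phi> - D"

lemma fin: "finite \<Phi>" using gm by (simp add: gem_def)

lemma i0: "y \<in> \<Phi> \<Longrightarrow> a0 y \<in> \<Phi> \<and> a0 y \<noteq> y \<and> a0 (a0 y) = y"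
  using gm by (simp add: gem_def invol_on_def)
lemma i1: "y \<in> \<Phi> \<Longrightarrow> a1 y \<in> \<Phi> \<and> a1 y \<noteq> y \<and> a1 (a1 y) = y"
  using gm by (simp add: gem_def invol_on_def)
lemma i2: "y \<in> \<Phi> \<Longrightarrow> a2 y \<in> \<Phi> \<and> a2 y \<noteq> y \<and> a2 (a2 y) = y"
  using gm by (simp add: gem_def invol_on_def)
lemma cm: "y \<in> \<Phi> \<Longrightarrow> a0 (a2 y) = a2 (a0 y) \<and> a0 y \<noteq> a2 y"
  using gm by (simp add: gem_def)

lemma ci_all: "set fs \<subseteq> {a0, a1, a2} \<Longrightarrow> closed_inv \<Phi> fs"
  unfolding closed_inv_def using i0 i1 i2 by blast

lemma D_sub: "D \<subseteq> \<Phi>" using xin i0 i2 by (auto simp: D_def)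

lemma D_a0: "d \<in> D \<Longrightarrow> a0 d \<in> D"
  using xin i0 i2 cm unfolding D_def by auto
lemma D_a2: "d \<in> D \<Longrightarrow> a2 d \<in> D"
  using xin i0 i2 cm unfolding D_def by auto

lemma D_same: "d \<in> D \<Longrightarrow> D = {d, a0 d, a2 d, a0 (a2 d)}"
  using xin i0 i2 cm unfolding D_def by auto

lemma V_eq: "y \<in> \<Phi> \<Longrightarrow> z \<in> orbit [a1, a2] y \<Longrightarrow> orbit [a1, a2] z = orbit [a1, a2] y"
  by (rule orbit_eq[OF ci_all]) auto

lemma a1D: assumes "d \<in> D" "a1 d \<in> D" shows "a1 d = a2 d"
proof -
  have dP: "d \<in> \<Phi>" using assms D_sub by auto
  have v1: "a1 d \<in> orbit [a1, a2] d" by (rule orbit_step) auto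
  have v2: "a2 d \<in> orbit [a1, a2] d" by (rule orbit_step) auto
  have "a1 d \<in> {d, a0 d, a2 d, a0 (a2 d)}" using assms D_same by blast
  moreover have "a1 d \<noteq> d" using i1 dP by blast
  moreover have "a1 d \<noteq> a0 d" using H0[OF dP] v1 by auto
  moreover have "a1 d \<noteq> a0 (a2 d)"
  proof
    assume "a1 d = a0 (a2 d)"
    then have "a0 (a2 d) \<in> orbit [a1, a2] (a2 d)" using v1 V_eq[OF dP v2] by simp
    then show False using H0 i2 dP by blast
  qed
  ultimately show ?thesis by blast
qed

lemma Psi_sub: "\<Psi> \<subseteq> \<Phi>" by (auto simp: \<Psi>_def)

lemma b1_same: "a1 y \<notin> D \<Longrightarrow> b1 y = a1 y" by (simp add: b1_def)

lemma b1_prop: assumes "y \<in> \<Psi>" shows "b1 y \<in> \<Psi> \<and> b1 y \<noteq> y \<and> b1 (b1 y) = y"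
proof (cases "a1 y \<in> D")
  case False
  have yP: "y \<in> \<Phi>" "y \<notin> D" using assms by (auto simp: \<Psi>_def)
  have "a1 (a1 y) = y" using i1 yP by blast
  then show ?thesis using False yP i1 by (auto simp: b1_def \<Psi>_def)
next
  case True
  let ?d = "a1 y"
  have yP: "y \<in> \<Phi>" "y \<notin> D" using assms by (auto simp: \<Psi>_def)
  have dP: "?d \<in> \<Phi>" using D_sub True by auto
  have d2: "a2 ?d \<in> D" using D_a2 True by blast
  have d2P: "a2 ?d \<in> \<Phi>" using d2 D_sub by auto
  have nd: "a1 (a2 ?d) \<notin> D"
  proof
    assume "a1 (a2 ?d) \<in> D"
    then have "a1 (a2 ?d) = a2 (a2 ?d)" using a1D d2 by blast
    then have "a1 (a2 ?d) = ?d" using i2 dP by simp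
    then have "a2 ?d = a1 ?d" using i1 d2P by metis
    then have "a2 ?d = y" using i1 yP by simp
    then show False using d2 yP by simp
  qed
  have b: "b1 y = a1 (a2 ?d)" using True by (simp add: b1_def)
  have bb: "b1 (a1 (a2 ?d)) = y"
  proof -
    have "a1 (a1 (a2 ?d)) = a2 ?d" using i1 d2P by blast
    then show ?thesis using d2 i2 dP i1 yP by (simp add: b1_def)
  qed
  have ne: "a1 (a2 ?d) \<noteq> y"
  proof
    assume "a1 (a2 ?d) = y"
    then have "a2 ?d = a1 y" using i1 d2P by metis
    then show False using i2 dP by simp
  qed
  show ?thesis using b bb ne nd i1 d2P by (simp add: \<Psi>_def)
qed

lemma Psi_a0: "y \<in> \<Psi> \<Longrightarrow> a0 y \<in> \<Psi>"
  using i0 D_a0 unfolding \<Psi>_def by (metis DiffE DiffI)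
lemma Psi_a2: "y \<in> \<Psi> \<Longrightarrow> a2 y \<in> \<Psi>"
  using i2 D_a2 unfolding \<Psi>_def by (metis DiffE DiffI)

lemma gem_Psi: "gem \<Psi> a0 b1 a2"
  unfolding gem_def invol_on_def
  using fin Psi_sub b1_prop Psi_a0 Psi_a2 i0 i2 cm by (auto intro: finite_subset)

lemma ci_Psi: "set gs \<subseteq> {a0, b1, a2} \<Longrightarrow> closed_inv \<Psi> gs"
  unfolding closed_inv_def using b1_prop Psi_a0 Psi_a2 i0 i2 Psi_sub by blast

end

context del begin

definition "Pn = {q \<in> \<Psi>. a1 q \<in> D}"

definition lists_ok :: "(nat \<Rightarrow> nat) list \<Rightarrow> (nat \<Rightarrow> nat) list \<Rightarrow> bool" where
  "lists_ok fs gs \<longleftrightarrow> a1 \<in> set fs \<and> set fs \<subseteq> {a0, a1, a2} \<and> b1 \<in> set gs \<and> set gs \<subseteq> {a0, b1, a2}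
     \<and> set fs - {a1} \<subseteq> set gs \<and> set gs - {b1} \<subseteq> set fs"

lemma lists_ok_V: "lists_ok [a1, a2] [b1, a2]" by (auto simp: lists_ok_def)
lemma lists_ok_F: "lists_ok [a0, a1] [a0, b1]" by (auto simp: lists_ok_def)
lemma lists_ok_C: "lists_ok [a0, a1, a2] [a0, b1, a2]" by (auto simp: lists_ok_def)

lemma untouched:
  assumes ok: "lists_ok fs gs" and yP: "y \<in> \<Phi>" and dis: "orbit fs y \<inter> D = {}"
  shows "orbit gs y = orbit fs y"
proof (rule orbit_agree)
  fix w f' assume w: "w \<in> orbit fs y" and f': "f' \<in> set gs"
  show "\<exists>f\<in>set fs. f' w = f w"
  proof (cases "f' = b1")
    case True
    have "a1 w \<in> orbit fs y" using orbit_step ok w by (auto simp: lists_ok_def)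
    then have "b1 w = a1 w" using dis b1_same by blast
    then show ?thesis using True ok by (auto simp: lists_ok_def)
  next
    case False then show ?thesis using f' ok by (auto simp: lists_ok_def)
  qed
next
  fix w f assume w: "w \<in> orbit fs y" and f: "f \<in> set fs"
  show "\<exists>f'\<in>set gs. f' w = f w"
  proof (cases "f = a1")
    case True
    have "a1 w \<in> orbit fs y" using orbit_step ok w by (auto simp: lists_ok_def)
    then have "b1 w = a1 w" using dis b1_same by blast
    then show ?thesis using True ok by (auto simp: lists_ok_def)
  next
    case False then show ?thesis using f ok by (auto simp: lists_ok_def)
  qed
qed

lemma step_gs:
  assumes ok: "lists_ok fs gs" and w: "w \<in> \<Psi>" and f: "f \<in> set fs" and nd: "f w \<notin> D"
  shows "f w \<in> orbit gs w"
proof (cases "f = a1")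
  case True
  then have "b1 w = f w" using nd b1_same by simp
  then show ?thesis using orbit_step[of b1 gs w w] ok by (auto simp: lists_ok_def)
next
  case False
  then have "f \<in> set gs" using ok f by (auto simp: lists_ok_def)
  then show ?thesis using orbit_step[of f gs w w] by simp
qed

lemma reach:
  assumes ok: "lists_ok fs gs" and path: "(y0, z) \<in> (stp fs)\<^sup>*" and y0P: "y0 \<in> \<Phi>"
  shows "z \<in> \<Phi> \<and> (z \<notin> D \<longrightarrow> ((y0 \<notin> D \<and> z \<in> orbit gs y0) \<or>
            (\<exists>q. q \<in> Pn \<and> q \<in> orbit fs y0 \<and> z \<in> orbit gs q)))"
  using path
proof (induction rule: rtrancl_induct)
  case base then show ?case using y0P by simp
next
  case (step w w2)
  from step(2) obtain f where f: "f \<in> set fs" "w2 = f w" by (auto simp: stp_def)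
  have fs3: "f \<in> {a0, a1, a2}" using ok f by (auto simp: lists_ok_def)
  have wP: "w \<in> \<Phi>" using step(3) by (rule conjunct1)
  have w2P: "w2 \<in> \<Phi>"
  proof -
    have "f = a0 \<or> f = a1 \<or> f = a2" using fs3 by simp
    then show ?thesis using f(2) i0[OF wP] i1[OF wP] i2[OF wP] by blast
  qed
  have w2o: "w2 \<in> orbit fs y0" using step(1) step(2) by (simp add: orbit_stp)
  show ?case
  proof (intro conjI w2P impI)
    assume nd2: "w2 \<notin> D"
    show "(y0 \<notin> D \<and> w2 \<in> orbit gs y0) \<or> (\<exists>q. q \<in> Pn \<and> q \<in> orbit fs y0 \<and> w2 \<in> orbit gs q)"
    proof (cases "w \<in> D")
      case False
      then have wPs: "w \<in> \<Psi>" using wP by (simp add: \<Psi>_def)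
      have "w2 \<in> orbit gs w" using step_gs[OF ok wPs f(1)] nd2 f(2) by simp
      have "(y0 \<notin> D \<and> w \<in> orbit gs y0) \<or> (\<exists>q. q \<in> Pn \<and> q \<in> orbit fs y0 \<and> w \<in> orbit gs q)"
        using step(3) False by simp
      then show ?thesis
      proof
        assume "y0 \<notin> D \<and> w \<in> orbit gs y0"
        then show ?thesis using \<open>w2 \<in> orbit gs w\<close> orbit_trans by metis
      next
        assume "\<exists>q. q \<in> Pn \<and> q \<in> orbit fs y0 \<and> w \<in> orbit gs q"
        then obtain q where "q \<in> Pn" "q \<in> orbit fs y0" "w \<in> orbit gs q" by blast
        then show ?thesis using \<open>w2 \<in> orbit gs w\<close> orbit_trans by metis
      qed
    next
      case True
      have "f = a1"
      proof (rule ccontr)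
        assume "f \<noteq> a1"
        then have "f = a0 \<or> f = a2" using fs3 by auto
        then show False using D_a0 D_a2 True nd2 f(2) by auto
      qed
      have "a1 w2 = w" using \<open>f = a1\<close> f(2) i1[OF wP] by simp
      then have "w2 \<in> Pn" unfolding Pn_def \<Psi>_def using True nd2 w2P by blast
      then show ?thesis
        by (intro disjI2 exI[of _ w2] conjI) (simp_all add: w2o)
    qed
  qed
qed

abbreviation "p1 \<equiv> a1 x"
abbreviation "p2 \<equiv> a1 (a2 x)"
abbreviation "p3 \<equiv> a1 (a0 x)"
abbreviation "p4 \<equiv> a1 (a0 (a2 x))"

lemma Pn_sub: "Pn \<subseteq> {p1, p2, p3, p4}"
proof
  fix q assume q: "q \<in> Pn"
  then have "q \<in> \<Phi>" "a1 q \<in> D" by (auto simp: Pn_def \<Psi>_def)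
  then have "a1 (a1 q) = q" using i1 by blast
  then have "q \<in> a1 ` D" using \<open>a1 q \<in> D\<close> by (metis image_eqI)
  moreover have "a1 ` D = {p1, p2, p3, p4}" by (auto simp: D_def)
  ultimately show "q \<in> {p1, p2, p3, p4}" by simp
qed

lemma x0P: "a0 x \<in> \<Phi>" and x2P: "a2 x \<in> \<Phi>" and x02P: "a0 (a2 x) \<in> \<Phi>"
  using i0[OF xin] i2[OF xin] i0[OF i2[OF xin, THEN conjunct1]] by auto

lemma inD: "x \<in> D" "a0 x \<in> D" "a2 x \<in> D" "a0 (a2 x) \<in> D" by (auto simp: D_def)

lemma b1_p1: "b1 p1 = p2"
proof -
  have "a1 p1 = x" using i1[OF xin] by blast
  then show ?thesis using inD by (simp add: b1_def)
qed

lemma b1_p3: "b1 p3 = p4"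
proof -
  have "a1 p3 = a0 x" using i1[OF x0P] by blast
  moreover have "a2 (a0 x) = a0 (a2 x)" using cm[OF xin] by simp
  ultimately show ?thesis using inD by (simp add: b1_def)
qed

lemma p12: "p1 \<in> D \<longleftrightarrow> p2 \<in> D"
proof
  assume "p1 \<in> D"
  then have "p1 = a2 x" using a1D inD by blast
  then have "p2 = x" using i1[OF xin] by simp
  then show "p2 \<in> D" using inD by simp
next
  assume "p2 \<in> D"
  then have "p2 = a2 (a2 x)" using a1D inD by blast
  then have "p2 = x" using i2[OF xin] by simp
  then have "a2 x = p1" using i1[OF x2P] by metis
  then show "p1 \<in> D" using inD by simp
qed

lemma p34: "p3 \<in> D \<longleftrightarrow> p4 \<in> D"
proof
  assume "p3 \<in> D"
  then have "p3 = a2 (a0 x)" using a1D inD by blast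
  then have "p3 = a0 (a2 x)" using cm[OF xin] by simp
  then have "p4 = a0 x" using i1[OF x0P] by simp
  then show "p4 \<in> D" using inD by simp
next
  assume "p4 \<in> D"
  then have "p4 = a2 (a0 (a2 x))" using a1D inD by blast
  moreover have "a0 (a2 x) = a2 (a0 x)" using cm[OF xin] by simp
  moreover have "a2 (a2 (a0 x)) = a0 x" using i2[OF x0P] by blast
  ultimately have "p4 = a0 x" by simp
  then have "a0 (a2 x) = p3" using i1[OF x02P] by metis
  then show "p3 \<in> D" using inD by simp
qed

lemma Pn_mem: assumes "q \<in> {p1, p2, p3, p4}" "q \<notin> D" shows "q \<in> Pn"
proof -
  have "q \<in> a1 ` D" using assms(1) by (auto simp: D_def)
  then obtain d where d: "d \<in> D" "q = a1 d" by blast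
  then have "d \<in> \<Phi>" using D_sub by blast
  then have "q \<in> \<Phi>" "a1 q = d" using i1 d(2) by auto
  then show ?thesis using assms(2) d(1) by (simp add: Pn_def \<Psi>_def)
qed

end

context del begin

abbreviation "V \<equiv> orbit [a1, a2]"
abbreviation "V' \<equiv> orbit [b1, a2]"
abbreviation "F \<equiv> orbit [a0, a1]"
abbreviation "F' \<equiv> orbit [a0, b1]"
abbreviation "C \<equiv> orbit [a0, a1, a2]"
abbreviation "C' \<equiv> orbit [a0, b1, a2]"
abbreviation "Ed \<equiv> orbit [a0, a2]"

lemma st0: "a0 \<in> set fs \<Longrightarrow> y \<in> orbit fs z \<Longrightarrow> a0 y \<in> orbit fs z" by (rule orbit_step)
lemma st1: "a1 \<in> set fs \<Longrightarrow> y \<in> orbit fs z \<Longrightarrow> a1 y \<in> orbit fs z" by (rule orbit_step)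
lemma st2: "a2 \<in> set fs \<Longrightarrow> y \<in> orbit fs z \<Longrightarrow> a2 y \<in> orbit fs z" by (rule orbit_step)
lemma stb: "b1 \<in> set fs \<Longrightarrow> y \<in> orbit fs z \<Longrightarrow> b1 y \<in> orbit fs z" by (rule orbit_step)

lemma oeq: "set fs \<subseteq> {a0, a1, a2} \<Longrightarrow> y \<in> \<Phi> \<Longrightarrow> z \<in> orbit fs y \<Longrightarrow> orbit fs z = orbit fs y"
  by (rule orbit_eq[OF ci_all])
lemma oeq': "set gs \<subseteq> {a0, b1, a2} \<Longrightarrow> y \<in> \<Psi> \<Longrightarrow> z \<in> orbit gs y \<Longrightarrow> orbit gs z = orbit gs y"
  by (rule orbit_eq[OF ci_Psi])
lemma oin: "set fs \<subseteq> {a0, a1, a2} \<Longrightarrow> y \<in> \<Phi> \<Longrightarrow> orbit fs y \<subseteq> \<Phi>"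
  by (rule orbit_in[OF ci_all])
lemma oin': "set gs \<subseteq> {a0, b1, a2} \<Longrightarrow> y \<in> \<Psi> \<Longrightarrow> orbit gs y \<subseteq> \<Psi>"
  by (rule orbit_in[OF ci_Psi])

lemma Ed_x: "Ed x = D"
proof
  show "Ed x \<subseteq> D"
  proof (rule orbit_sub)
    show "x \<in> D" by (rule inD)
    fix f w assume "f \<in> set [a0, a2]" "w \<in> D"
    then show "f w \<in> D" using D_a0 D_a2 by auto
  qed
  have "a0 x \<in> Ed x" "a2 x \<in> Ed x" by (auto intro: st0 st1 st2 stb)
  moreover then have "a0 (a2 x) \<in> Ed x" by (auto intro: st0 st1 st2 stb)
  ultimately show "D \<subseteq> Ed x" by (auto simp: D_def)
qed

lemma V_a2: "V (a2 x) = V x"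
  by (rule oeq[OF _ xin]) (simp_all add: st2[OF _ orbit_self])
lemma V_a02: "V (a0 (a2 x)) = V (a0 x)"
proof -
  have "a2 (a0 x) \<in> V (a0 x)" by (simp add: st2[OF _ orbit_self])
  then have "a0 (a2 x) \<in> V (a0 x)" using cm[OF xin] by simp
  then show ?thesis using oeq[where fs="[a1, a2]" and y="a0 x" and z="a0 (a2 x)", OF _ x0P] by simp
qed
lemma F_a0: "F (a0 x) = F x"
  by (rule oeq[OF _ xin]) (simp_all add: st0[OF _ orbit_self])
lemma F_a02: "F (a0 (a2 x)) = F (a2 x)"
  by (rule oeq[OF _ x2P]) (simp_all add: st0[OF _ orbit_self])

lemma D_C: "d \<in> D \<Longrightarrow> C d = C x"
proof -
  assume "d \<in> D"
  then have "d \<in> Ed x" using Ed_x by simp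
  moreover have "Ed x \<subseteq> C x" by (rule orbit_mono) auto
  ultimately have "d \<in> C x" by blast
  then show ?thesis using oeq[where fs="[a0, a1, a2]" and y=x and z=d, OF _ xin] by simp
qed

lemma a0_notin_V: "a0 x \<notin> V x" using H0[OF xin] .

lemma p_in_V: "p1 \<in> V x" "p2 \<in> V x" "p3 \<in> V (a0 x)" "p4 \<in> V (a0 x)"
proof -
  show "p1 \<in> V x" by (simp add: st1[OF _ orbit_self])
  have "a2 x \<in> V x" by (simp add: st2[OF _ orbit_self])
  then show "p2 \<in> V x" by (rule st1[rotated]) simp
  show "p3 \<in> V (a0 x)" by (simp add: st1[OF _ orbit_self])
  have "a2 (a0 x) \<in> V (a0 x)" by (simp add: st2[OF _ orbit_self])
  then have "a1 (a2 (a0 x)) \<in> V (a0 x)" by (rule st1[rotated]) simp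
  then show "p4 \<in> V (a0 x)" using cm[OF xin] by simp
qed

lemma Vx_ne: "V x \<noteq> V (a0 x)"
proof
  assume "V x = V (a0 x)"
  then have "a0 x \<in> V x" using orbit_self[of "a0 x" "[a1, a2]"] by simp
  then show False using a0_notin_V by simp
qed

lemma V'_sub: assumes "y \<in> \<Psi>" shows "V' y \<subseteq> V y"
proof (rule orbit_sub)
  show "y \<in> V y" by simp
  fix f w assume f: "f \<in> set [b1, a2]" and w: "w \<in> V y"
  have 1: "a1 w \<in> V y" using w by (rule st1[rotated]) simp
  have 2: "a2 (a1 w) \<in> V y" using 1 by (rule st2[rotated]) simp
  have 3: "a1 (a2 (a1 w)) \<in> V y" using 2 by (rule st1[rotated]) simp
  have "b1 w \<in> V y" using 1 3 by (simp add: b1_def)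
  moreover have "a2 w \<in> V y" using w by (rule st2[rotated]) simp
  ultimately show "f w \<in> V y" using f by auto
qed

definition "UU fs = {r \<in> orbits \<Phi> fs. r \<inter> D = {}}"

lemma U_sub: assumes ok: "lists_ok fs gs" shows "UU fs \<subseteq> orbits \<Psi> gs"
proof
  fix r assume "r \<in> UU fs"
  then obtain y where y: "y \<in> \<Phi>" "r = orbit fs y" "r \<inter> D = {}" by (auto simp: UU_def orbits_def)
  then have "y \<notin> D" using orbit_self[of y fs] by blast
  then have "y \<in> \<Psi>" using y by (simp add: \<Psi>_def)
  moreover have "orbit gs y = r" using untouched[OF ok y(1)] y by simp
  ultimately show "r \<in> orbits \<Psi> gs" by (auto simp: orbits_def)
qed

lemma new_not_U: assumes ok: "lists_ok fs gs" and q: "q \<in> Pn" shows "orbit gs q \<notin> UU fs"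
proof
  assume "orbit gs q \<in> UU fs"
  then obtain y where y: "y \<in> \<Phi>" "orbit gs q = orbit fs y" "orbit fs y \<inter> D = {}"
    by (auto simp: UU_def orbits_def)
  have qP: "q \<in> \<Phi>" "a1 q \<in> D" using q by (auto simp: Pn_def \<Psi>_def)
  have "q \<in> orbit fs y" using y(2) orbit_self[of q gs] by simp
  moreover have "set fs \<subseteq> {a0, a1, a2}" "a1 \<in> set fs" using ok by (auto simp: lists_ok_def)
  ultimately have "orbit fs q = orbit fs y" using oeq y(1) by blast
  moreover have "a1 q \<in> orbit fs q" using st1[OF \<open>a1 \<in> set fs\<close> orbit_self] .
  ultimately show False using qP(2) y(3) by auto
qed

lemma fin_orbits: "finite (orbits \<Phi> fs)" "finite (orbits \<Psi> gs)"
  using fin Psi_sub by (auto simp: orbits_def intro: finite_subset)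

lemma count_eq: assumes ok: "lists_ok fs gs"
  shows "int (card (orbits \<Psi> gs)) - int (card (orbits \<Phi> fs))
       = int (card (orbits \<Psi> gs - UU fs)) - int (card (orbits \<Phi> fs - UU fs))"
  by (rule card_diff_common[OF fin_orbits(1) fin_orbits(2) _ U_sub[OF ok]]) (auto simp: UU_def)

lemma count_eq_E:
  shows "int (card (orbits \<Psi> [a0, a2])) - int (card (orbits \<Phi> [a0, a2]))
       = int (card (orbits \<Psi> [a0, a2] - UU [a0, a2])) - int (card (orbits \<Phi> [a0, a2] - UU [a0, a2]))"
proof (rule card_diff_common[OF fin_orbits(1) fin_orbits(2)])
  show "UU [a0, a2] \<subseteq> orbits \<Phi> [a0, a2]" by (auto simp: UU_def)
  show "UU [a0, a2] \<subseteq> orbits \<Psi> [a0, a2]"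
  proof
    fix r assume "r \<in> UU [a0, a2]"
    then obtain y where y: "y \<in> \<Phi>" "r = Ed y" "r \<inter> D = {}" by (auto simp: UU_def orbits_def)
    then have "y \<notin> D" using orbit_self[of y "[a0, a2]"] by blast
    then show "r \<in> orbits \<Psi> [a0, a2]" using y by (auto simp: orbits_def \<Psi>_def)
  qed
qed

lemma nE: "orbits \<Psi> [a0, a2] - UU [a0, a2] = {}"
proof -
  { fix y assume y: "y \<in> \<Psi>"
    have "Ed y \<inter> D = {}"
    proof (rule ccontr)
      assume "Ed y \<inter> D \<noteq> {}"
      then obtain d where d: "d \<in> Ed y" "d \<in> D" by blast
      have yP: "y \<in> \<Phi>" using y Psi_sub by blast
      have "Ed d = Ed y" using oeq[where fs="[a0, a2]" and y=y and z=d] yP d(1) by simp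
      moreover have "Ed d = D"
      proof -
        have "d \<in> Ed x" using Ed_x d(2) by simp
        then have "Ed d = Ed x" using oeq[where fs="[a0, a2]" and y=x and z=d, OF _ xin] by simp
        then show ?thesis using Ed_x by simp
      qed
      ultimately have "y \<in> D" using orbit_self[of y "[a0, a2]"] by simp
      then show False using y by (simp add: \<Psi>_def)
    qed
    then have "Ed y \<in> UU [a0, a2]" using y Psi_sub by (auto simp: UU_def orbits_def)
  }
  then show ?thesis by (auto simp: orbits_def)
qed

lemma tE: "Ed x \<in> orbits \<Phi> [a0, a2] - UU [a0, a2]"
proof -
  have "x \<in> Ed x \<inter> D" using inD by simp
  then show ?thesis using xin unfolding UU_def orbits_def by blast
qed

lemma tC: "C x \<in> orbits \<Phi> [a0, a1, a2] - UU [a0, a1, a2]"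
proof -
  have "x \<in> C x \<inter> D" using inD by simp
  then show ?thesis using xin unfolding UU_def orbits_def by blast
qed

lemma touched_orbit:
  assumes "r \<in> orbits \<Phi> fs - UU fs" "set fs \<subseteq> {a0, a1, a2}"
  shows "\<exists>d\<in>D. r = orbit fs d"
proof -
  from assms obtain y where y: "y \<in> \<Phi>" "r = orbit fs y" "r \<inter> D \<noteq> {}" by (auto simp: UU_def orbits_def)
  then obtain d where "d \<in> r" "d \<in> D" by blast
  then show ?thesis using oeq[OF assms(2) y(1)] y(2) by metis
qed

lemma tV: "orbits \<Phi> [a1, a2] - UU [a1, a2] \<subseteq> {V x, V (a0 x)}"
proof
  fix r assume "r \<in> orbits \<Phi> [a1, a2] - UU [a1, a2]"
  then obtain d where d: "d \<in> D" "r = V d" using touched_orbit by fastforce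
  then show "r \<in> {V x, V (a0 x)}" using V_a2 V_a02 by (auto simp: D_def)
qed

lemma tF: "orbits \<Phi> [a0, a1] - UU [a0, a1] \<subseteq> {F x, F (a2 x)}"
proof
  fix r assume "r \<in> orbits \<Phi> [a0, a1] - UU [a0, a1]"
  then obtain d where d: "d \<in> D" "r = F d" using touched_orbit by fastforce
  then show "r \<in> {F x, F (a2 x)}" using F_a0 F_a02 by (auto simp: D_def)
qed

definition "Q = {p1, p3} - D"

lemma Q_Pn: "Q \<subseteq> Pn" using Pn_mem by (auto simp: Q_def)
lemma Q_Psi: "Q \<subseteq> \<Psi>" using Q_Pn by (auto simp: Pn_def)
lemma Q_fin: "finite Q" by (simp add: Q_def)

lemma nV: "V' ` Q \<subseteq> orbits \<Psi> [b1, a2] - UU [a1, a2]"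
  using Q_Psi new_not_U[OF lists_ok_V] Q_Pn by (auto simp: orbits_def)
lemma nF: "F' ` Q \<subseteq> orbits \<Psi> [a0, b1] - UU [a0, a1]"
  using Q_Psi new_not_U[OF lists_ok_F] Q_Pn by (auto simp: orbits_def)

lemma V'_inj: "inj_on V' Q"
proof (rule inj_onI)
  fix a b assume a: "a \<in> Q" and b: "b \<in> Q" and e: "V' a = V' b"
  show "a = b"
  proof (rule ccontr)
    assume "a \<noteq> b"
    then have ab: "{a, b} = {p1, p3}" using a b by (auto simp: Q_def)
    have p1Q: "p1 \<in> \<Psi>" "p3 \<in> \<Psi>" using ab a b Q_Psi by auto
    have "V' p1 = V' p3" using ab e by (auto simp: doubleton_eq_iff)
    then have "p3 \<in> V' p1" using orbit_self[of p3 "[b1, a2]"] by simp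
    then have "p3 \<in> V p1" using V'_sub[OF p1Q(1)] by blast
    moreover have "V p1 = V x" using oeq[OF _ xin p_in_V(1)] by simp
    moreover have "V p3 = V (a0 x)" using oeq[OF _ x0P p_in_V(3)] by simp
    ultimately have "p3 \<in> V x" "V p3 = V (a0 x)" by simp_all
    moreover have "V p3 = V x" using oeq[where fs="[a1, a2]" and y=x and z=p3, OF _ xin] \<open>p3 \<in> V x\<close> by simp
    ultimately have "V x = V (a0 x)" by simp
    then show False using Vx_ne by simp
  qed
qed

lemma nC: "orbits \<Psi> [a0, b1, a2] - UU [a0, a1, a2] \<subseteq> C' ` Q"
proof
  fix r assume r: "r \<in> orbits \<Psi> [a0, b1, a2] - UU [a0, a1, a2]"
  then obtain y where y: "y \<in> \<Psi>" "r = C' y" by (auto simp: orbits_def)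
  have yP: "y \<in> \<Phi>" "y \<notin> D" using y by (auto simp: \<Psi>_def)
  have "C y \<inter> D \<noteq> {}"
  proof
    assume "C y \<inter> D = {}"
    then have "C' y = C y" using untouched[OF lists_ok_C yP(1)] by simp
    moreover have "C y \<in> UU [a0, a1, a2]" using yP \<open>C y \<inter> D = {}\<close> by (auto simp: UU_def orbits_def)
    ultimately show False using r y by simp
  qed
  then obtain d where d: "d \<in> C y" "d \<in> D" by blast
  have "C d = C y" using oeq[where fs="[a0, a1, a2]" and y=y and z=d] yP(1) d(1) by simp
  then have "C y = C x" using D_C[OF d(2)] by simp
  then have "y \<in> C x" using orbit_self[of y "[a0, a1, a2]"] by simp
  then have path: "(x, y) \<in> (stp [a0, a1, a2])\<^sup>*" by (simp add: orbit_stp)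
  from reach[OF lists_ok_C path xin] yP(2) inD(1)
  obtain q where q: "q \<in> Pn" "y \<in> C' q" by blast
  have qPs: "q \<in> \<Psi>" using q by (simp add: Pn_def)
  have Cq: "C' y = C' q" using oeq'[where gs="[a0, b1, a2]" and y=q and z=y] qPs q(2) by simp
  have qD: "q \<notin> D" using qPs by (simp add: \<Psi>_def)
  have "q \<in> {p1, p2, p3, p4}" using q Pn_sub by blast
  then consider "q = p1" | "q = p2" | "q = p3" | "q = p4" by blast
  then show "r \<in> C' ` Q"
  proof cases
    case 1 then show ?thesis using qD y Cq by (auto simp: Q_def)
  next
    case 2
    then have p1D: "p1 \<notin> D" using p12 qD by simp
    then have "p1 \<in> \<Psi>" using Pn_mem by (auto simp: Pn_def)
    moreover have "p2 \<in> C' p1" using b1_p1 orbit_step[of b1 "[a0, b1, a2]" p1 p1] by simp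
    ultimately have "C' p2 = C' p1" using oeq'[where gs="[a0, b1, a2]" and y=p1 and z=p2] by simp
    then show ?thesis using 2 y Cq p1D by (auto simp: Q_def)
  next
    case 3 then show ?thesis using qD y Cq by (auto simp: Q_def)
  next
    case 4
    then have p3D: "p3 \<notin> D" using p34 qD by simp
    then have "p3 \<in> \<Psi>" using Pn_mem by (auto simp: Pn_def)
    moreover have "p4 \<in> C' p3" using b1_p3 orbit_step[of b1 "[a0, b1, a2]" p3 p3] by simp
    ultimately have "C' p4 = C' p3" using oeq'[where gs="[a0, b1, a2]" and y=p3 and z=p4] by simp
    then show ?thesis using 4 y Cq p3D by (auto simp: Q_def)
  qed
qed

lemma CF: "card (C' ` Q) \<le> card (F' ` Q)"
proof (rule card_img_le_img[OF Q_fin])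
  fix a b assume a: "a \<in> Q" and b: "b \<in> Q" and e: "F' a = F' b"
  have aP: "a \<in> \<Psi>" "b \<in> \<Psi>" using a b Q_Psi by auto
  have "b \<in> F' a" using e orbit_self[of b "[a0, b1]"] by simp
  then have "b \<in> C' a" using orbit_mono[of "[a0, b1]" "[a0, b1, a2]"] by auto
  then have "C' b = C' a" using oeq'[where gs="[a0, b1, a2]" and y=a and z=b] aP(1) by simp
  then show "C' a = C' b" by simp
qed

end

context del begin

lemma Psi_fin: "finite \<Psi>" using fin Psi_sub finite_subset by blast

lemma parity:
  assumes ne: "F x \<noteq> F (a2 x)"
  shows "p1 \<notin> D" "p3 \<notin> D" "C' p3 = C' p1"
proof -
  have nx2: "a2 x \<notin> F x"
  proof
    assume "a2 x \<in> F x"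
    then have "F (a2 x) = F x" using oeq[where fs="[a0, a1]" and y=x and z="a2 x"] xin by simp
    then show False using ne by simp
  qed
  have nx02: "a0 (a2 x) \<notin> F x"
  proof
    assume "a0 (a2 x) \<in> F x"
    then have "a0 (a0 (a2 x)) \<in> F x" by (rule st0[rotated]) simp
    then show False using nx2 i0[OF x2P] by simp
  qed
  have p1F: "p1 \<in> F x" by (simp add: st1[OF _ orbit_self])
  have a0F: "a0 x \<in> F x" by (simp add: st0[OF _ orbit_self])
  have p3F: "p3 \<in> F x" using a0F by (rule st1[rotated]) simp
  show p1D: "p1 \<notin> D"
  proof
    assume "p1 \<in> D"
    then have "p1 = a2 x" using a1D inD(1) by blast
    then show False using p1F nx2 by simp
  qed
  show p3D: "p3 \<notin> D"
  proof
    assume "p3 \<in> D"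
    then have "p3 = a2 (a0 x)" using a1D inD(2) by blast
    then have "p3 = a0 (a2 x)" using cm[OF xin] by simp
    then show False using p3F nx02 by simp
  qed
  have p1P: "p1 \<in> \<Psi>" using Pn_mem[of p1] p1D by (auto simp: Pn_def)
  have p3P: "p3 \<in> \<Psi>" using Pn_mem[of p3] p3D by (auto simp: Pn_def)
  have "p3 \<in> C' p1"
  proof (rule ccontr)
    assume np3: "p3 \<notin> C' p1"
    define A where "A = C' p1 \<inter> F x"
    have SP: "C' p1 \<subseteq> \<Psi>" using oin'[of "[a0, b1, a2]" p1] p1P by simp
    have finA: "finite A" using SP Psi_fin unfolding A_def by (meson finite_Int finite_subset)
    have "even (card A)"
    proof (rule even_card_invol[OF finA])
      fix w assume w: "w \<in> A"
      then have wP: "w \<in> \<Phi>" using SP Psi_sub unfolding A_def by blast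
      have "a0 w \<in> C' p1" using w unfolding A_def by (intro st0) auto
      moreover have "a0 w \<in> F x" using w unfolding A_def by (intro st0) auto
      ultimately show "a0 w \<in> A \<and> a0 w \<noteq> w \<and> a0 (a0 w) = w" using i0[OF wP] unfolding A_def by blast
    qed
    moreover have "even (card (A - {p1}))"
    proof (rule even_card_invol)
      show "finite (A - {p1})" using finA by simp
      fix w assume w: "w \<in> A - {p1}"
      then have wS: "w \<in> C' p1" and wF: "w \<in> F x" and wn: "w \<noteq> p1" unfolding A_def by auto
      have wPs: "w \<in> \<Psi>" using wS SP by blast
      then have wP: "w \<in> \<Phi>" "w \<notin> D" using Psi_sub by (auto simp: \<Psi>_def)
      have a1F: "a1 w \<in> F x" using wF by (rule st1[rotated]) simp
      have a1nD: "a1 w \<notin> D"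
      proof
        assume a1D': "a1 w \<in> D"
        have "a1 w \<noteq> a2 x" using a1F nx2 by auto
        moreover have "a1 w \<noteq> a0 (a2 x)" using a1F nx02 by auto
        ultimately have "a1 w = x \<or> a1 w = a0 x" using a1D' by (auto simp: D_def)
        then have "w = p1 \<or> w = p3" using i1[OF wP(1)] by auto
        then show False using wn np3 wS by auto
      qed
      have "b1 w = a1 w" using a1nD by (rule b1_same)
      then have a1S: "a1 w \<in> C' p1" using wS stb[of "[a0, b1, a2]" w p1] by simp
      have "a1 w \<noteq> p1"
      proof
        assume "a1 w = p1"
        then have "w = x" using i1[OF wP(1)] i1[OF xin] by metis
        then show False using wP(2) inD by simp
      qed
      then show "a1 w \<in> A - {p1} \<and> a1 w \<noteq> w \<and> a1 (a1 w) = w"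
        using a1S a1F i1[OF wP(1)] unfolding A_def by blast
    qed
    moreover have "p1 \<in> A" using p1F unfolding A_def by simp
    ultimately show False using finA by (simp add: card_Diff_singleton)
  qed
  then show "C' p3 = C' p1" using oeq'[where gs="[a0, b1, a2]" and y=p1 and z=p3] p1P by simp
qed

lemma card2: "card {a, b} \<le> 2" by (cases "a = b") auto

lemma genus_le: "gem_euler_genus \<Psi> a0 b1 a2 \<le> gem_euler_genus \<Phi> a0 a1 a2"
proof -
  define nv where "nv = card (orbits \<Psi> [b1, a2] - UU [a1, a2])"
  define tv where "tv = card (orbits \<Phi> [a1, a2] - UU [a1, a2])"
  define nf where "nf = card (orbits \<Psi> [a0, b1] - UU [a0, a1])"
  define tf where "tf = card (orbits \<Phi> [a0, a1] - UU [a0, a1])"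
  define nc where "nc = card (orbits \<Psi> [a0, b1, a2] - UU [a0, a1, a2])"
  define tc where "tc = card (orbits \<Phi> [a0, a1, a2] - UU [a0, a1, a2])"
  define ne where "ne = card (orbits \<Psi> [a0, a2] - UU [a0, a2])"
  define te where "te = card (orbits \<Phi> [a0, a2] - UU [a0, a2])"
  have eV: "int (card (orbits \<Psi> [b1, a2])) - int (card (orbits \<Phi> [a1, a2])) = int nv - int tv"
    unfolding nv_def tv_def by (rule count_eq[OF lists_ok_V])
  have eF: "int (card (orbits \<Psi> [a0, b1])) - int (card (orbits \<Phi> [a0, a1])) = int nf - int tf"
    unfolding nf_def tf_def by (rule count_eq[OF lists_ok_F])
  have eC: "int (card (orbits \<Psi> [a0, b1, a2])) - int (card (orbits \<Phi> [a0, a1, a2])) = int nc - int tc"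
    unfolding nc_def tc_def by (rule count_eq[OF lists_ok_C])
  have eE: "int (card (orbits \<Psi> [a0, a2])) - int (card (orbits \<Phi> [a0, a2])) = int ne - int te"
    unfolding ne_def te_def by (rule count_eq_E)
  have fin1: "finite (orbits \<Phi> fs - UU fs)" for fs using fin_orbits(1) by blast
  have fin2: "finite (orbits \<Psi> gs - UU fs)" for gs fs using fin_orbits(2) by blast
  have tv2: "tv \<le> 2" unfolding tv_def using card_mono[OF _ tV] card2 by (meson finite.emptyI finite.insertI le_trans)
  have tf2: "tf \<le> 2" unfolding tf_def using card_mono[OF _ tF] card2 by (meson finite.emptyI finite.insertI le_trans)
  have tf1: "F x = F (a2 x) \<Longrightarrow> tf \<le> 1" unfolding tf_def using card_mono[OF _ tF] by simp
  have tc1: "tc \<ge> 1" unfolding tc_def using tC fin1 by (metis One_nat_def Suc_leI card_gt_0_iff empty_iff)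
  have te1: "te \<ge> 1" unfolding te_def using tE fin1 by (metis One_nat_def Suc_leI card_gt_0_iff empty_iff)
  have ne0: "ne = 0" unfolding ne_def nE by simp
  have nvQ: "nv \<ge> card Q"
  proof -
    have "card Q = card (V' ` Q)" using card_image[OF V'_inj] by simp
    also have "\<dots> \<le> nv" unfolding nv_def by (rule card_mono[OF fin2 nV])
    finally show ?thesis .
  qed
  have nfQ: "nf \<ge> card (F' ` Q)" unfolding nf_def by (rule card_mono[OF fin2 nF])
  have ncQ: "nc \<le> card (C' ` Q)" unfolding nc_def by (rule card_mono[OF finite_imageI[OF Q_fin] nC])
  have CFQ: "card (C' ` Q) \<le> card (F' ` Q)" by (rule CF)
  have CQ: "card (C' ` Q) \<le> card Q" by (rule card_image_le[OF Q_fin])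
  have key: "2 * int nc + int tv + int tf \<le> 3 + int nv + int nf"
  proof (cases "F x = F (a2 x)")
    case True
    then show ?thesis using tf1 tv2 nvQ nfQ ncQ CFQ CQ by linarith
  next
    case False
    note par = parity[OF False]
    have p13: "p1 \<noteq> p3"
    proof
      assume "p1 = p3"
      then have "a1 p1 = a1 p3" by simp
      then have "x = a0 x" using i1[OF xin] i1[OF x0P] by simp
      then show False using i0[OF xin] by simp
    qed
    have QQ: "Q = {p1, p3}" using par unfolding Q_def by auto
    have "card Q = 2" using QQ p13 by simp
    moreover have "C' ` Q = {C' p1}" using QQ par(3) by auto
    ultimately show ?thesis using tf2 tv2 nvQ nfQ ncQ CFQ by simp
  qed
  show ?thesis
    unfolding gem_euler_genus_def using eV eF eC eE key tc1 te1 ne0 by linarith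
qed

lemma Pn_side: assumes q: "q \<in> Pn"
  shows "(V q = V x \<and> V' q = V' p1) \<or> (V q = V (a0 x) \<and> V' q = V' p3)"
proof -
  have qD: "q \<notin> D" using q by (simp add: Pn_def \<Psi>_def)
  have "q \<in> {p1, p2, p3, p4}" using q Pn_sub by blast
  then consider "q = p1" | "q = p2" | "q = p3" | "q = p4" by blast
  then show ?thesis
  proof cases
    case 1 then show ?thesis using oeq[OF _ xin p_in_V(1)] by simp
  next
    case 2
    then have p1D: "p1 \<notin> D" using p12 qD by simp
    then have p1P: "p1 \<in> \<Psi>" using Pn_mem by (auto simp: Pn_def)
    have "p2 \<in> V' p1" using b1_p1 stb[of "[b1, a2]" p1 p1] by simp
    then have "V' p2 = V' p1" using oeq'[where gs="[b1, a2]" and y=p1 and z=p2] p1P by simp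
    then show ?thesis using 2 oeq[OF _ xin p_in_V(2)] by simp
  next
    case 3 then show ?thesis using oeq[OF _ x0P p_in_V(3)] by simp
  next
    case 4
    then have p3D: "p3 \<notin> D" using p34 qD by simp
    then have p3P: "p3 \<in> \<Psi>" using Pn_mem by (auto simp: Pn_def)
    have "p4 \<in> V' p3" using b1_p3 stb[of "[b1, a2]" p3 p3] by simp
    then have "V' p4 = V' p3" using oeq'[where gs="[b1, a2]" and y=p3 and z=p4] p3P by simp
    then show ?thesis using 4 oeq[OF _ x0P p_in_V(4)] by simp
  qed
qed

lemma V_conn:
  assumes y: "y \<in> \<Psi>" and z: "z \<in> \<Psi>" and zy: "z \<in> V y"
  shows "z \<in> V' y"
proof -
  have yP: "y \<in> \<Phi>" "y \<notin> D" and zP: "z \<in> \<Phi>" "z \<notin> D" using y z by (auto simp: \<Psi>_def)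
  have p1: "(y, z) \<in> (stp [a1, a2])\<^sup>*" using zy by (simp add: orbit_stp)
  have yz: "y \<in> V z" using orbit_sym[OF ci_all[of "[a1, a2]"] yP(1) zy] by simp
  have p2: "(z, y) \<in> (stp [a1, a2])\<^sup>*" using yz by (simp add: orbit_stp)
  have r1: "z \<in> V' y \<or> (\<exists>q. q \<in> Pn \<and> q \<in> V y \<and> z \<in> V' q)"
    using reach[OF lists_ok_V p1 yP(1)] zP(2) by blast
  have r2: "y \<in> V' z \<or> (\<exists>q. q \<in> Pn \<and> q \<in> V z \<and> y \<in> V' q)"
    using reach[OF lists_ok_V p2 zP(1)] yP(2) by blast
  have Vzy: "V z = V y" using oeq[where fs="[a1, a2]" and y=y and z=z] yP(1) zy by simp
  show ?thesis
  proof (cases "z \<in> V' y")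
    case True then show ?thesis .
  next
    case False
    show ?thesis
    proof (cases "y \<in> V' z")
      case True
      then show ?thesis using orbit_sym[OF ci_Psi[of "[b1, a2]"] z] by simp
    next
      case False
      from r1 \<open>z \<notin> V' y\<close> obtain q where q: "q \<in> Pn" "q \<in> V y" "z \<in> V' q" by blast
      from r2 False obtain q2 where q2: "q2 \<in> Pn" "q2 \<in> V z" "y \<in> V' q2" by blast
      have Vq: "V q = V y" using oeq[where fs="[a1, a2]" and y=y and z=q] yP(1) q(2) by simp
      have Vq2: "V q2 = V y" using oeq[where fs="[a1, a2]" and y=z and z=q2] zP(1) q2(2) Vzy by simp
      have "V' q = V' q2" using Pn_side[OF q(1)] Pn_side[OF q2(1)] Vq Vq2 Vx_ne by auto
      then have "y \<in> V' q" using q2(3) by simp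
      moreover have qP: "q \<in> \<Psi>" using q(1) by (simp add: Pn_def)
      ultimately have "V' y = V' q" using oeq'[where gs="[b1, a2]" and y=q and z=y] by simp
      then show ?thesis using q(3) by simp
    qed
  qed
qed

lemma H0_Psi: "y \<in> \<Psi> \<Longrightarrow> a0 y \<notin> V' y"
  using V'_sub H0 Psi_sub by blast

end

lemma gem_closed: assumes "gem \<Phi> a0 a1 a2" "set fs \<subseteq> {a0, a1, a2}" shows "closed_inv \<Phi> fs"
  unfolding closed_inv_def
proof (intro ballI)
  fix f z assume f: "f \<in> set fs" and z: "z \<in> \<Phi>"
  have i: "invol_on \<Phi> a0" "invol_on \<Phi> a1" "invol_on \<Phi> a2" using assms(1) by (simp_all add: gem_def)
  have "f = a0 \<or> f = a1 \<or> f = a2" using f assms(2) by blast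
  then show "f z \<in> \<Phi> \<and> f (f z) = z" using i z unfolding invol_on_def by blast
qed

definition Jinv :: "('a \<times> 'a) set \<Rightarrow> ('a \<times> 'a) set \<Rightarrow> (nat \<Rightarrow> 'a) \<Rightarrow> nat set \<Rightarrow> (nat \<Rightarrow> nat) \<Rightarrow> (nat \<Rightarrow> nat) \<Rightarrow> (nat \<Rightarrow> nat) \<Rightarrow> bool" where
  "Jinv E EH \<nu> \<Phi> a0 a1 a2 \<longleftrightarrow> gem \<Phi> a0 a1 a2 \<and>
     (\<forall>y\<in>\<Phi>. \<nu> (a1 y) = \<nu> y \<and> \<nu> (a2 y) = \<nu> y \<and> (\<nu> y, \<nu> (a0 y)) \<in> E) \<and>
     (\<forall>y\<in>\<Phi>. \<forall>z\<in>\<Phi>. \<nu> y = \<nu> z \<longrightarrow> z \<in> orbit [a1, a2] y) \<and>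
     (\<forall>y\<in>\<Phi>. \<forall>z\<in>\<Phi>. {\<nu> y, \<nu> (a0 y)} = {\<nu> z, \<nu> (a0 z)} \<longrightarrow> z \<in> orbit [a0, a2] y) \<and>
     (\<forall>(u, v)\<in>EH. \<exists>y\<in>\<Phi>. \<nu> y = u \<and> \<nu> (a0 y) = v)"

lemma nu_const:
  assumes J: "Jinv E EH \<nu> \<Phi> a0 a1 a2" and y: "y \<in> \<Phi>"
  shows "orbit [a1, a2] y \<subseteq> {w \<in> \<Phi>. \<nu> w = \<nu> y}"
proof (rule orbit_sub)
  show "y \<in> {w \<in> \<Phi>. \<nu> w = \<nu> y}" using y by simp
  fix f w assume f: "f \<in> set [a1, a2]" and w: "w \<in> {w \<in> \<Phi>. \<nu> w = \<nu> y}"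
  have g: "gem \<Phi> a0 a1 a2" using J by (simp add: Jinv_def)
  have "a1 w \<in> \<Phi>" "a2 w \<in> \<Phi>" using g w unfolding gem_def invol_on_def by auto
  moreover have "\<nu> (a1 w) = \<nu> w" "\<nu> (a2 w) = \<nu> w" using J w by (auto simp: Jinv_def)
  ultimately show "f w \<in> {w \<in> \<Phi>. \<nu> w = \<nu> y}" using f w by auto
qed

lemma iterate:
  assumes J: "Jinv E EH \<nu> \<Phi> a0 a1 a2" and irr: "\<forall>u. (u, u) \<notin> E" and symH: "sym EH"
  shows "\<exists>\<Phi>' a1'. Jinv E EH \<nu> \<Phi>' a0 a1' a2 \<and> (\<forall>y\<in>\<Phi>'. (\<nu> y, \<nu> (a0 y)) \<in> EH) \<and>
            gem_euler_genus \<Phi>' a0 a1' a2 \<le> gem_euler_genus \<Phi> a0 a1 a2"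
  using J
proof (induction "card \<Phi>" arbitrary: \<Phi> a1 rule: less_induct)
  case less
  note J = less.prems
  show ?case
  proof (cases "\<forall>y\<in>\<Phi>. (\<nu> y, \<nu> (a0 y)) \<in> EH")
    case True then show ?thesis using J by blast
  next
    case False
    then obtain x where x: "x \<in> \<Phi>" "(\<nu> x, \<nu> (a0 x)) \<notin> EH" by blast
    have g: "gem \<Phi> a0 a1 a2" using J by (simp add: Jinv_def)
    have Jv: "\<forall>y\<in>\<Phi>. \<forall>z\<in>\<Phi>. \<nu> y = \<nu> z \<longrightarrow> z \<in> orbit [a1, a2] y" using J by (simp add: Jinv_def)
    have Je: "\<forall>y\<in>\<Phi>. \<forall>z\<in>\<Phi>. {\<nu> y, \<nu> (a0 y)} = {\<nu> z, \<nu> (a0 z)} \<longrightarrow> z \<in> orbit [a0, a2] y"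
      using J by (simp add: Jinv_def)
    have Jc: "\<forall>(u, v)\<in>EH. \<exists>y\<in>\<Phi>. \<nu> y = u \<and> \<nu> (a0 y) = v" using J by (simp add: Jinv_def)
    have H0: "a0 y \<notin> orbit [a1, a2] y" if y: "y \<in> \<Phi>" for y
    proof
      assume "a0 y \<in> orbit [a1, a2] y"
      then have "\<nu> (a0 y) = \<nu> y" using nu_const[OF J y] by blast
      moreover have "(\<nu> y, \<nu> (a0 y)) \<in> E" using J y by (simp add: Jinv_def)
      ultimately show False using irr by simp
    qed
    interpret d: del \<Phi> a0 a1 a2 x using g x H0 by unfold_locales auto
    have Psub: "d.\<Psi> \<subset> \<Phi>" using d.Psi_sub d.inD(1) x(1) by (auto simp: d.\<Psi>_def)
    have cardlt: "card d.\<Psi> < card \<Phi>" using psubset_card_mono[OF d.fin Psub] .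
    have nu1: "\<nu> (a1 y) = \<nu> y" "\<nu> (a2 y) = \<nu> y" "(\<nu> y, \<nu> (a0 y)) \<in> E" if "y \<in> \<Phi>" for y
      using J that by (auto simp: Jinv_def)
    have Dpair: "{\<nu> d, \<nu> (a0 d)} = {\<nu> x, \<nu> (a0 x)}" if dD: "d \<in> d.D" for d
    proof -
      have x0: "a0 (a0 x) = x" using d.i0[OF x(1)] by blast
      have x2: "\<nu> (a2 x) = \<nu> x" using nu1[OF x(1)] by simp
      have x02: "\<nu> (a0 (a2 x)) = \<nu> (a0 x)"
        using d.cm[OF x(1)] nu1(2)[OF d.x0P] by simp
      have x002: "a0 (a0 (a2 x)) = a2 x" using d.i0[OF d.x2P] by blast
      from dD show ?thesis unfolding d.D_def using x0 x2 x02 x002 by auto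
    qed
    have J': "Jinv E EH \<nu> d.\<Psi> a0 d.b1 a2"
      unfolding Jinv_def
    proof (intro conjI)
      show "gem d.\<Psi> a0 d.b1 a2" by (rule d.gem_Psi)
      show "\<forall>y\<in>d.\<Psi>. \<nu> (d.b1 y) = \<nu> y \<and> \<nu> (a2 y) = \<nu> y \<and> (\<nu> y, \<nu> (a0 y)) \<in> E"
      proof
        fix y assume y: "y \<in> d.\<Psi>"
        then have yP: "y \<in> \<Phi>" using d.Psi_sub by blast
        have a1P: "a1 y \<in> \<Phi>" using d.i1[OF yP] by blast
        have a21P: "a2 (a1 y) \<in> \<Phi>" using d.i2[OF a1P] by blast
        have "\<nu> (d.b1 y) = \<nu> y"
          unfolding d.b1_def using nu1[OF yP] nu1[OF a1P] nu1[OF a21P] by simp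
        then show "\<nu> (d.b1 y) = \<nu> y \<and> \<nu> (a2 y) = \<nu> y \<and> (\<nu> y, \<nu> (a0 y)) \<in> E" using nu1[OF yP] by simp
      qed
      show "\<forall>y\<in>d.\<Psi>. \<forall>z\<in>d.\<Psi>. \<nu> y = \<nu> z \<longrightarrow> z \<in> orbit [d.b1, a2] y"
      proof (intro ballI impI)
        fix y z assume y: "y \<in> d.\<Psi>" and z: "z \<in> d.\<Psi>" and e: "\<nu> y = \<nu> z"
        have "y \<in> \<Phi>" "z \<in> \<Phi>" using y z d.Psi_sub by auto
        then have "z \<in> orbit [a1, a2] y" using Jv e by (meson)
        then show "z \<in> orbit [d.b1, a2] y" using d.V_conn[OF y z] by simp
      qed
      show "\<forall>y\<in>d.\<Psi>. \<forall>z\<in>d.\<Psi>. {\<nu> y, \<nu> (a0 y)} = {\<nu> z, \<nu> (a0 z)} \<longrightarrow> z \<in> orbit [a0, a2] y"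
      proof (intro ballI impI)
        fix y z assume y: "y \<in> d.\<Psi>" and z: "z \<in> d.\<Psi>" and e: "{\<nu> y, \<nu> (a0 y)} = {\<nu> z, \<nu> (a0 z)}"
        have yP: "y \<in> \<Phi>" and zP: "z \<in> \<Phi>" using y z d.Psi_sub by auto
        show "z \<in> orbit [a0, a2] y" using Je yP zP e by (meson)
      qed
      show "\<forall>(u, v)\<in>EH. \<exists>y\<in>d.\<Psi>. \<nu> y = u \<and> \<nu> (a0 y) = v"
      proof (intro ballI, clarify)
        fix u v assume uv: "(u, v) \<in> EH"
        have "case (u, v) of (u, v) \<Rightarrow> \<exists>y\<in>\<Phi>. \<nu> y = u \<and> \<nu> (a0 y) = v" by (rule bspec[OF Jc uv])
        then obtain y where y: "y \<in> \<Phi>" "\<nu> y = u" "\<nu> (a0 y) = v" by auto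
        have "y \<notin> d.D"
        proof
          assume "y \<in> d.D"
          then have "{u, v} = {\<nu> x, \<nu> (a0 x)}" using Dpair[OF \<open>y \<in> d.D\<close>] y by simp
          then have "(u = \<nu> x \<and> v = \<nu> (a0 x)) \<or> (u = \<nu> (a0 x) \<and> v = \<nu> x)"
            by (simp add: doubleton_eq_iff)
          then have "(\<nu> x, \<nu> (a0 x)) \<in> EH" using uv symH
            by (metis symD)
          then show False using x(2) by simp
        qed
        then show "\<exists>y\<in>d.\<Psi>. \<nu> y = u \<and> \<nu> (a0 y) = v" using y by (auto simp: d.\<Psi>_def)
      qed
    qed
    have IH: "\<exists>\<Phi>' a1'. Jinv E EH \<nu> \<Phi>' a0 a1' a2 \<and> (\<forall>y\<in>\<Phi>'. (\<nu> y, \<nu> (a0 y)) \<in> EH) \<and>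
            gem_euler_genus \<Phi>' a0 a1' a2 \<le> gem_euler_genus d.\<Psi> a0 d.b1 a2"
      by (rule less.hyps[OF cardlt J'])
    then obtain \<Phi>' a1' where
      r: "Jinv E EH \<nu> \<Phi>' a0 a1' a2" "\<forall>y\<in>\<Phi>'. (\<nu> y, \<nu> (a0 y)) \<in> EH"
         "gem_euler_genus \<Phi>' a0 a1' a2 \<le> gem_euler_genus d.\<Psi> a0 d.b1 a2" by (elim exE conjE)
    have "gem_euler_genus \<Phi>' a0 a1' a2 \<le> gem_euler_genus \<Phi> a0 a1 a2"
      using r(3) d.genus_le by (rule order_trans)
    then show ?thesis using r(1,2) by blast
  qed
qed

lemma split_genus:
  fixes B :: "nat \<Rightarrow> 'a set" and g :: nat
  assumes J: "Jinv E EH \<nu> \<Phi> a0 a1 a2"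
    and EHd: "EH = (\<Union>i\<le>g. induced E (B i))"
    and good: "\<forall>y\<in>\<Phi>. (\<nu> y, \<nu> (a0 y)) \<in> EH"
    and disj: "\<And>i j. i \<le> g \<Longrightarrow> j \<le> g \<Longrightarrow> i \<noteq> j \<Longrightarrow> B i \<inter> B j = {}"
    and np: "\<And>i. i \<le> g \<Longrightarrow> \<not> planar (B i) (induced E (B i))"
  shows "gem_euler_genus \<Phi> a0 a1 a2 \<ge> int g + 1"
proof -
  define P where "P i = {y \<in> \<Phi>. \<nu> y \<in> B i}" for i
  have g0: "gem \<Phi> a0 a1 a2" using J by (simp add: Jinv_def)
  have Jn: "\<forall>y\<in>\<Phi>. \<nu> (a1 y) = \<nu> y \<and> \<nu> (a2 y) = \<nu> y \<and> (\<nu> y, \<nu> (a0 y)) \<in> E" using J by (simp add: Jinv_def)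
  have Jv: "\<forall>y\<in>\<Phi>. \<forall>z\<in>\<Phi>. \<nu> y = \<nu> z \<longrightarrow> z \<in> orbit [a1, a2] y" using J by (simp add: Jinv_def)
  have Je: "\<forall>y\<in>\<Phi>. \<forall>z\<in>\<Phi>. {\<nu> y, \<nu> (a0 y)} = {\<nu> z, \<nu> (a0 z)} \<longrightarrow> z \<in> orbit [a0, a2] y"
    using J by (simp add: Jinv_def)
  have Jc: "\<forall>(u, v)\<in>EH. \<exists>y\<in>\<Phi>. \<nu> y = u \<and> \<nu> (a0 y) = v" using J by (simp add: Jinv_def)
  have finP: "finite \<Phi>" using g0 by (simp add: gem_def)
  have iv: "invol_on \<Phi> a0" "invol_on \<Phi> a1" "invol_on \<Phi> a2" using g0 by (simp_all add: gem_def)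
  have loc: "\<exists>i\<le>g. \<nu> y \<in> B i \<and> \<nu> (a0 y) \<in> B i" if "y \<in> \<Phi>" for y
  proof -
    have "(\<nu> y, \<nu> (a0 y)) \<in> EH" using good that by blast
    then obtain i where "i \<le> g" "(\<nu> y, \<nu> (a0 y)) \<in> induced E (B i)" using EHd by blast
    then show ?thesis by (auto simp: induced_def)
  qed
  have uniq: "\<nu> (a0 y) \<in> B i" if yy: "y \<in> \<Phi>" and ii: "i \<le> g" and yb: "\<nu> y \<in> B i" for y i
  proof -
    obtain j where j: "j \<le> g" "\<nu> y \<in> B j" "\<nu> (a0 y) \<in> B j" using loc[OF yy] by blast
    have "i = j" using disj[OF ii j(1)] yb j(2) by blast
    then show ?thesis using j by simp
  qed
  have Pa0: "a0 y \<in> P i" if "y \<in> P i" "i \<le> g" for y i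
    using that uniq iv(1) unfolding P_def invol_on_def by blast
  have Pa1: "a1 y \<in> P i" if "y \<in> P i" for y i
    using that Jn iv(2) unfolding P_def invol_on_def by auto
  have Pa2: "a2 y \<in> P i" if "y \<in> P i" for y i
    using that Jn iv(3) unfolding P_def invol_on_def by auto
  have gemP: "gem (P i) a0 a1 a2" if i: "i \<le> g" for i
    unfolding gem_def invol_on_def
  proof (intro conjI ballI)
    show "finite (P i)" using finP unfolding P_def by simp
    fix y assume y: "y \<in> P i"
    then have yP: "y \<in> \<Phi>" unfolding P_def by simp
    show "a0 y \<in> P i" using Pa0 y i by blast
    show "a1 y \<in> P i" using Pa1 y by blast
    show "a2 y \<in> P i" using Pa2 y by blast
    show "a0 y \<noteq> y" "a0 (a0 y) = y" using iv(1) yP unfolding invol_on_def by auto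
    show "a1 y \<noteq> y" "a1 (a1 y) = y" using iv(2) yP unfolding invol_on_def by auto
    show "a2 y \<noteq> y" "a2 (a2 y) = y" using iv(3) yP unfolding invol_on_def by auto
    show "a0 (a2 y) = a2 (a0 y)" "a0 y \<noteq> a2 y" using g0 yP unfolding gem_def by auto
  qed
  have embP: "gem_embeds (B i) (induced E (B i)) (P i) a0 a1 a2 \<nu>" if i: "i \<le> g" for i
    unfolding gem_embeds_def
  proof (intro conjI)
    show "gem (P i) a0 a1 a2" using gemP[OF i] .
    show "\<forall>y\<in>P i. \<nu> y \<in> B i \<and> \<nu> (a1 y) = \<nu> y \<and> \<nu> (a2 y) = \<nu> y \<and> (\<nu> y, \<nu> (a0 y)) \<in> induced E (B i)"
    proof
      fix y assume y: "y \<in> P i"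
      then have yP: "y \<in> \<Phi>" "\<nu> y \<in> B i" unfolding P_def by auto
      have "\<nu> (a0 y) \<in> B i" using uniq[OF yP(1) i yP(2)] .
      then show "\<nu> y \<in> B i \<and> \<nu> (a1 y) = \<nu> y \<and> \<nu> (a2 y) = \<nu> y \<and> (\<nu> y, \<nu> (a0 y)) \<in> induced E (B i)"
        using Jn yP unfolding induced_def by auto
    qed
    show "\<forall>y\<in>P i. \<forall>z\<in>P i. \<nu> y = \<nu> z \<longrightarrow> z \<in> orbit [a1, a2] y"
      using Jv unfolding P_def by auto
    show "\<forall>y\<in>P i. \<forall>z\<in>P i. {\<nu> y, \<nu> (a0 y)} = {\<nu> z, \<nu> (a0 z)} \<longrightarrow> z \<in> orbit [a0, a2] y"
    proof (intro ballI impI)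
      fix y z assume y: "y \<in> P i" and z: "z \<in> P i" and e: "{\<nu> y, \<nu> (a0 y)} = {\<nu> z, \<nu> (a0 z)}"
      have "y \<in> \<Phi>" "z \<in> \<Phi>" using y z unfolding P_def by auto
      then show "z \<in> orbit [a0, a2] y" using Je e by meson
    qed
    show "\<forall>(u, v)\<in>induced E (B i). \<exists>y\<in>P i. \<nu> y = u \<and> \<nu> (a0 y) = v"
    proof (intro ballI, clarify)
      fix u v assume uv: "(u, v) \<in> induced E (B i)"
      then have uvH: "(u, v) \<in> EH" using EHd i by blast
      have "case (u, v) of (u, v) \<Rightarrow> \<exists>y\<in>\<Phi>. \<nu> y = u \<and> \<nu> (a0 y) = v" by (rule bspec[OF Jc uvH])
      then obtain y where y: "y \<in> \<Phi>" "\<nu> y = u" "\<nu> (a0 y) = v" by auto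
      have "u \<in> B i" using uv unfolding induced_def by auto
      then have "y \<in> P i" using y unfolding P_def by simp
      then show "\<exists>y\<in>P i. \<nu> y = u \<and> \<nu> (a0 y) = v" using y by blast
    qed
  qed
  have gen1: "gem_euler_genus (P i) a0 a1 a2 \<ge> 1" if i: "i \<le> g" for i
  proof (rule ccontr)
    assume "\<not> gem_euler_genus (P i) a0 a1 a2 \<ge> 1"
    then have "gem_euler_genus (P i) a0 a1 a2 \<le> int 0" by simp
    then have "euler_genus_le (B i) (induced E (B i)) 0"
      unfolding euler_genus_le_def using embP[OF i] by blast
    then show False using np[OF i] by (simp add: planar_def)
  qed
  have cover: "\<Phi> = (\<Union>i\<le>g. P i)"
  proof
    show "\<Phi> \<subseteq> (\<Union>i\<le>g. P i)" using loc unfolding P_def by blast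
    show "(\<Union>i\<le>g. P i) \<subseteq> \<Phi>" unfolding P_def by blast
  qed
  have csplit: "int (card (orbits \<Phi> fs)) = (\<Sum>i\<le>g. int (card (orbits (P i) fs)))"
    if fs: "set fs \<subseteq> {a0, a1, a2}" for fs
  proof -
    have ci: "closed_inv (P i) fs" if "i \<le> g" for i using gem_closed[OF gemP[OF that] fs] .
    have "orbits \<Phi> fs = (\<Union>i\<le>g. orbits (P i) fs)"
      unfolding orbits_def using cover by blast
    moreover have "card (\<Union>i\<le>g. orbits (P i) fs) = (\<Sum>i\<le>g. card (orbits (P i) fs))"
    proof (rule card_UN_disjoint)
      show "finite {..g}" by simp
      show "\<forall>i\<in>{..g}. finite (orbits (P i) fs)" using finP unfolding orbits_def P_def by simp
      show "\<forall>i\<in>{..g}. \<forall>j\<in>{..g}. i \<noteq> j \<longrightarrow> orbits (P i) fs \<inter> orbits (P j) fs = {}"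
      proof (intro ballI impI)
        fix i j assume i: "i \<in> {..g}" and j: "j \<in> {..g}" and ij: "i \<noteq> j"
        show "orbits (P i) fs \<inter> orbits (P j) fs = {}"
        proof (rule ccontr)
          assume "orbits (P i) fs \<inter> orbits (P j) fs \<noteq> {}"
          then obtain y z where y: "y \<in> P i" and z: "z \<in> P j" and e: "orbit fs y = orbit fs z"
            unfolding orbits_def by blast
          have "z \<in> orbit fs y" using e by simp
          then have "z \<in> P i" using orbit_in[OF ci y] i by auto
          then have "\<nu> z \<in> B i \<inter> B j" using z unfolding P_def by simp
          then show False using disj i j ij by auto
        qed
      qed
    qed
    ultimately show ?thesis by (simp add: of_nat_sum)
  qed
  have "gem_euler_genus \<Phi> a0 a1 a2 = (\<Sum>i\<le>g. gem_euler_genus (P i) a0 a1 a2)"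
    unfolding gem_euler_genus_def
    using csplit[of "[a0, a1, a2]"] csplit[of "[a1, a2]"] csplit[of "[a0, a2]"] csplit[of "[a0, a1]"]
    by (simp add: sum.distrib sum_subtractf sum_distrib_left)
  also have "\<dots> \<ge> (\<Sum>i\<le>g. 1)" using gen1 by (intro sum_mono) auto
  finally show ?thesis by simp
qed

lemma no_sep:
  fixes B :: "nat \<Rightarrow> 'a set"
  assumes sg: "sgraph V E" and eg: "euler_genus_le V E g"
    and disj: "\<And>i j. i \<le> g \<Longrightarrow> j \<le> g \<Longrightarrow> i \<noteq> j \<Longrightarrow> B i \<inter> B j = {}"
    and np: "\<And>i. i \<le> g \<Longrightarrow> \<not> planar (B i) (induced E (B i))"
  shows False
proof -
  obtain \<Phi> a0 a1 a2 \<nu> where emb: "gem_embeds V E \<Phi> a0 a1 a2 \<nu>" and ge: "gem_euler_genus \<Phi> a0 a1 a2 \<le> int g"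
    using eg unfolding euler_genus_le_def by blast
  define EH where "EH = (\<Union>i\<le>g. induced E (B i))"
  have EHE: "EH \<subseteq> E" unfolding EH_def induced_def by blast
  have symE: "sym E" and irr: "\<forall>u. (u, u) \<notin> E" using sg by (auto simp: sgraph_def)
  have symH: "sym EH" using symE unfolding EH_def induced_def sym_def by blast
  have J: "Jinv E EH \<nu> \<Phi> a0 a1 a2"
    unfolding Jinv_def
  proof (intro conjI)
    show "gem \<Phi> a0 a1 a2" using emb by (simp add: gem_embeds_def)
    show "\<forall>y\<in>\<Phi>. \<nu> (a1 y) = \<nu> y \<and> \<nu> (a2 y) = \<nu> y \<and> (\<nu> y, \<nu> (a0 y)) \<in> E"
      using emb by (simp add: gem_embeds_def)
    show "\<forall>y\<in>\<Phi>. \<forall>z\<in>\<Phi>. \<nu> y = \<nu> z \<longrightarrow> z \<in> orbit [a1, a2] y"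
      using emb by (simp add: gem_embeds_def)
    show "\<forall>y\<in>\<Phi>. \<forall>z\<in>\<Phi>. {\<nu> y, \<nu> (a0 y)} = {\<nu> z, \<nu> (a0 z)} \<longrightarrow> z \<in> orbit [a0, a2] y"
      using emb by (simp add: gem_embeds_def)
    have c: "\<forall>(u, v)\<in>E. \<exists>x\<in>\<Phi>. \<nu> x = u \<and> \<nu> (a0 x) = v" using emb by (simp add: gem_embeds_def)
    show "\<forall>(u, v)\<in>EH. \<exists>y\<in>\<Phi>. \<nu> y = u \<and> \<nu> (a0 y) = v"
    proof (intro ballI, clarify)
      fix u v assume "(u, v) \<in> EH"
      then have uv: "(u, v) \<in> E" using EHE by blast
      have "case (u, v) of (u, v) \<Rightarrow> \<exists>y\<in>\<Phi>. \<nu> y = u \<and> \<nu> (a0 y) = v" by (rule bspec[OF c uv])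
      then show "\<exists>y\<in>\<Phi>. \<nu> y = u \<and> \<nu> (a0 y) = v" by simp
    qed
  qed
  obtain \<Phi>' a1' where r: "Jinv E EH \<nu> \<Phi>' a0 a1' a2" "\<forall>y\<in>\<Phi>'. (\<nu> y, \<nu> (a0 y)) \<in> EH"
      "gem_euler_genus \<Phi>' a0 a1' a2 \<le> gem_euler_genus \<Phi> a0 a1 a2"
    using iterate[OF J irr symH] by blast
  have "gem_euler_genus \<Phi>' a0 a1' a2 \<ge> int g + 1"
    by (rule split_genus[OF r(1) EH_def r(2) disj np]) auto
  then show False using r(3) ge by simp
qed

lemma relpow_sym: "sym E \<Longrightarrow> (u, v) \<in> E ^^ n \<Longrightarrow> (v, u) \<in> E ^^ n"
proof (induction n arbitrary: v)
  case 0 then show ?case by simp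
next
  case (Suc n)
  from Suc.prems(2) obtain y where y: "(u, y) \<in> E ^^ n" "(y, v) \<in> E" by (rule relpow_Suc_E)
  have "(y, u) \<in> E ^^ n" using Suc.IH[OF Suc.prems(1) y(1)] .
  moreover have "(v, y) \<in> E" using y(2) Suc.prems(1) by (simp add: sym_def)
  ultimately show ?case by (rule relpow_Suc_I2[rotated])
qed

lemma gdist_le: "(u, v) \<in> E ^^ n \<Longrightarrow> gdist E u v \<le> enat n"
  unfolding gdist_def by (auto intro: Least_le)

lemma gdist_fin: assumes h: "gdist E u v = enat n" shows "(u, v) \<in> E ^^ n"
proof -
  have ex: "\<exists>k. (u, v) \<in> E ^^ k"
  proof (rule ccontr)
    assume "\<not> (\<exists>k. (u, v) \<in> E ^^ k)"
    then have "gdist E u v = \<infinity>" unfolding gdist_def by simp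
    then show False using h by simp
  qed
  then have "gdist E u v = enat (LEAST k. (u, v) \<in> E ^^ k)" unfolding gdist_def by simp
  then have "n = (LEAST k. (u, v) \<in> E ^^ k)" using h by simp
  then show ?thesis using LeastI_ex[OF ex] by simp
qed

lemma gdist_self: "gdist E u u = 0"
proof -
  have "gdist E u u \<le> enat 0" by (rule gdist_le) simp
  then have "gdist E u u \<le> 0" by (simp add: zero_enat_def)
  then show ?thesis by simp
qed

lemma gdist_tri: "gdist E u w \<le> gdist E u v + gdist E v w"
proof (cases "gdist E u v")
  case (enat a)
  show ?thesis
  proof (cases "gdist E v w")
    case (enat b)
    have "(u, v) \<in> E ^^ a" by (rule gdist_fin) fact
    moreover have "(v, w) \<in> E ^^ b" by (rule gdist_fin) fact
    ultimately have "(u, w) \<in> E ^^ (a + b)" by (auto simp: relpow_add)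
    then have "gdist E u w \<le> enat (a + b)" by (rule gdist_le)
    then show ?thesis using \<open>gdist E u v = enat a\<close> enat by simp
  next
    case infinity then show ?thesis by simp
  qed
next
  case infinity then show ?thesis by simp
qed

lemma gdist_sym: assumes "sym E" shows "gdist E u v = gdist E v u"
proof -
  have eq: "\<And>k. (u, v) \<in> E ^^ k \<longleftrightarrow> (v, u) \<in> E ^^ k" using relpow_sym[OF assms] by blast
  show ?thesis unfolding gdist_def by (simp only: eq)
qed

lemma gdist_step: "(v, w) \<in> E \<Longrightarrow> gdist E u w \<le> gdist E u v + 1"
proof -
  assume "(v, w) \<in> E"
  then have "gdist E v w \<le> enat 1" by (intro gdist_le) simp
  then have "gdist E u v + gdist E v w \<le> gdist E u v + 1" by (simp add: add_left_mono one_enat_def)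
  then show ?thesis by (rule order_trans[OF gdist_tri])
qed

lemma ivt:
  assumes RE: "R \<subseteq> E" and path: "(u, v) \<in> R\<^sup>*" and m: "enat m \<le> gdist E u v"
  shows "\<exists>w. (u, w) \<in> R\<^sup>* \<and> gdist E u w = enat m"
  using path m
proof (induction rule: rtrancl_induct)
  case base
  then have "m = 0" using gdist_self[of E u] by (simp add: zero_enat_def)
  then show ?case using gdist_self[of E u] by (auto simp: zero_enat_def)
next
  case (step y z)
  show ?case
  proof (cases "enat m \<le> gdist E u y")
    case True
    then show ?thesis using step.IH by simp
  next
    case False
    then obtain k where k: "gdist E u y = enat k" "k < m"
      by (cases "gdist E u y") auto
    have "gdist E u z \<le> enat k + 1" using gdist_step[of y z E u] step(2) RE k(1) by auto
    moreover have "enat k + 1 \<le> enat m" using k(2) by (simp add: one_enat_def)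
    ultimately have "gdist E u z \<le> enat m" by (rule order_trans)
    then have "gdist E u z = enat m" using step.prems by simp
    moreover have "(u, z) \<in> R\<^sup>*" using step(1) step(2) by (rule rtrancl.rtrancl_into_rtrancl)
    ultimately show ?thesis by blast
  qed
qed

lemma comp_bound:
  fixes V :: "'a set" and E :: "('a \<times> 'a) set"
  assumes sg: "sgraph V E" and eg: "euler_genus_le V E g"
    and Xd: "X = {u \<in> V. \<not> planar (nbhd V E T {u}) (induced E (nbhd V E T {u}))}"
    and Nd: "N = nbhd V E (2 * \<rho>) X"
    and K: "K \<in> components N (induced E N)"
    and u: "u \<in> K" and v: "v \<in> K"
  shows "gdist E u v < enat (g * (2 * T + 4 * \<rho> + 1))"
proof (rule ccontr)
  define s where "s = 2 * T + 4 * \<rho> + 1"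
  assume "\<not> gdist E u v < enat (g * (2 * T + 4 * \<rho> + 1))"
  then have far: "enat (g * s) \<le> gdist E u v" unfolding s_def by (simp add: not_less)
  define R where "R = induced E N"
  have symE: "sym E" using sg by (simp add: sgraph_def)
  have RE: "R \<subseteq> E" unfolding R_def induced_def by blast
  have symR: "sym R" using symE unfolding R_def induced_def sym_def by blast
  from K obtain k where k: "k \<in> N" "K = {w \<in> N. (k, w) \<in> R\<^sup>*}"
    unfolding components_def R_def by blast
  have ku: "(k, u) \<in> R\<^sup>*" and kv: "(k, v) \<in> R\<^sup>*" and uN: "u \<in> N" using u v k(2) by auto
  have "(u, k) \<in> R\<^sup>*" using sym_rtrancl[OF symR] ku by (simp add: sym_def)
  then have uv: "(u, v) \<in> R\<^sup>*" using kv by (rule rtrancl_trans)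
  have reachN: "w \<in> N" if "(u, w) \<in> R\<^sup>*" for w
    using that
  proof (induction rule: rtrancl_induct)
    case base then show ?case using uN .
  next
    case (step y z) then show ?case unfolding R_def induced_def by blast
  qed
  have ex: "\<forall>j. \<exists>pw. j \<le> g \<longrightarrow> (fst pw \<in> X \<and> gdist E u (snd pw) = enat (j * s) \<and> gdist E (fst pw) (snd pw) \<le> enat (2 * \<rho>))"
  proof
    fix j
    show "\<exists>pw. j \<le> g \<longrightarrow> (fst pw \<in> X \<and> gdist E u (snd pw) = enat (j * s) \<and> gdist E (fst pw) (snd pw) \<le> enat (2 * \<rho>))"
    proof (cases "j \<le> g")
      case True
      have "enat (j * s) \<le> enat (g * s)" using True by simp
      then have "enat (j * s) \<le> gdist E u v" using far by (rule order_trans)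
      then obtain w where w: "(u, w) \<in> R\<^sup>*" "gdist E u w = enat (j * s)" using ivt[OF RE uv] by blast
      have "w \<in> N" using reachN[OF w(1)] .
      then obtain p where p: "p \<in> X" "gdist E p w \<le> enat (2 * \<rho>)" unfolding Nd nbhd_def by blast
      show ?thesis by (rule exI[of _ "(p, w)"]) (simp add: p w(2))
    qed simp
  qed
  from choice[OF ex] obtain f where f: "\<And>j. j \<le> g \<Longrightarrow> fst (f j) \<in> X \<and> gdist E u (snd (f j)) = enat (j * s) \<and> gdist E (fst (f j)) (snd (f j)) \<le> enat (2 * \<rho>)"
    by blast
  define xs where "xs j = fst (f j)" for j
  define ws where "ws j = snd (f j)" for j
  define B where "B j = nbhd V E T {xs j}" for j
  have np: "\<not> planar (B j) (induced E (B j))" if "j \<le> g" for j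
    using f[OF that] unfolding B_def xs_def Xd by simp
  have disj_lt: "B i \<inter> B j = {}" if ij: "i < j" "j \<le> g" for i j
  proof (rule ccontr)
    assume "B i \<inter> B j \<noteq> {}"
    then obtain y where yi: "gdist E (xs i) y \<le> enat T" and yj: "gdist E (xs j) y \<le> enat T"
      unfolding B_def nbhd_def by auto
    have fi: "gdist E u (ws i) = enat (i * s)" "gdist E (xs i) (ws i) \<le> enat (2 * \<rho>)"
      using f[of i] ij unfolding xs_def ws_def by auto
    have fj: "gdist E u (ws j) = enat (j * s)" "gdist E (xs j) (ws j) \<le> enat (2 * \<rho>)"
      using f[of j] ij unfolding xs_def ws_def by auto
    have a1: "gdist E u (ws j) \<le> gdist E u (ws i) + gdist E (ws i) (ws j)" by (rule gdist_tri)
    have a2: "gdist E (ws i) (ws j) \<le> gdist E (ws i) (xs i) + gdist E (xs i) (ws j)" by (rule gdist_tri)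
    have a3: "gdist E (xs i) (ws j) \<le> gdist E (xs i) y + gdist E y (ws j)" by (rule gdist_tri)
    have a4: "gdist E y (ws j) \<le> gdist E y (xs j) + gdist E (xs j) (ws j)" by (rule gdist_tri)
    have b1: "gdist E (ws i) (xs i) \<le> enat (2 * \<rho>)" using fi(2) gdist_sym[OF symE] by metis
    have b2: "gdist E y (xs j) \<le> enat T" using yj gdist_sym[OF symE] by metis
    have c4: "gdist E y (ws j) \<le> enat T + enat (2 * \<rho>)" using order_trans[OF a4 add_mono[OF b2 fj(2)]] .
    have c3: "gdist E (xs i) (ws j) \<le> enat T + (enat T + enat (2 * \<rho>))"
      using order_trans[OF a3 add_mono[OF yi c4]] .
    have c2: "gdist E (ws i) (ws j) \<le> enat (2 * \<rho>) + (enat T + (enat T + enat (2 * \<rho>)))"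
      using order_trans[OF a2 add_mono[OF b1 c3]] .
    have c1: "gdist E u (ws j) \<le> enat (i * s) + (enat (2 * \<rho>) + (enat T + (enat T + enat (2 * \<rho>))))"
      using order_trans[OF a1 add_mono[OF order.eq_iff[THEN iffD1, OF fi(1), THEN conjunct1] c2]] .
    then have "j * s \<le> i * s + (2 * \<rho> + (T + (T + 2 * \<rho>)))" using fj(1) by simp
    moreover have "(i + 1) * s \<le> j * s" using ij by (intro mult_right_mono) auto
    ultimately show False unfolding s_def by (simp add: algebra_simps)
  qed
  have disj: "B i \<inter> B j = {}" if "i \<le> g" "j \<le> g" "i \<noteq> j" for i j
  proof (cases "i < j")
    case True then show ?thesis using disj_lt that by blast
  next
    case False
    then have "j < i" using that by simp
    then show ?thesis using disj_lt[of j i] that by blast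
  qed
  show False by (rule no_sep[OF sg eg disj np])
qed

lemma diam_bound:
  fixes V :: "'a set" and E :: "('a \<times> 'a) set"
  assumes sg: "sgraph V E" and eg: "euler_genus_le V E g" and g1: "g \<ge> 1"
    and Xd: "X = {u \<in> V. \<not> planar (nbhd V E T {u}) (induced E (nbhd V E T {u}))}"
    and Nd: "N = nbhd V E (2 * \<rho>) X"
    and K: "K \<in> components N (induced E N)"
  shows "weak_diam E K \<le> enat (g * (2 * T + 4 * \<rho> + 1) - 1)"
  unfolding weak_diam_def
proof (rule Sup_least)
  fix d assume "d \<in> {gdist E u v |u v. u \<in> K \<and> v \<in> K}"
  then obtain u v where uv: "u \<in> K" "v \<in> K" "d = gdist E u v" by blast
  have "d < enat (g * (2 * T + 4 * \<rho> + 1))" using comp_bound[OF sg eg Xd Nd K uv(1,2)] uv(3) by simp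
  then show "d \<le> enat (g * (2 * T + 4 * \<rho> + 1) - 1)"
    by (cases d) auto
qed

theorem mainTheorem12:
  fixes g T \<rho> :: nat and V :: "'a set" and E :: "('a \<times> 'a) set"
  assumes "g \<ge> 1"
    and "sgraph V E"
    and "euler_genus_le V E g"
  shows "(let X = {u \<in> V. \<not> planar (nbhd V E T {u}) (induced E (nbhd V E T {u}))};
              N = nbhd V E (2 * \<rho>) X
          in \<forall>K \<in> components N (induced E N). weak_diam E K < enat (g * (2 * T + 4 * \<rho> + 1)))
       \<and> (\<exists>\<delta>::nat. \<delta> < g * (2 * T + 4 * \<rho> + 1) \<and>
            locally_nice T \<delta> \<rho> {(V', E'). sgraph V' E' \<and> euler_genus_le V' E' g}
                               {(V', E'). planar V' E'})"
proof -
  define s where "s = 2 * T + 4 * \<rho> + 1"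
  have gs: "g * s \<ge> 1" using assms(1) unfolding s_def by simp
  have lt: "enat (g * s - 1) < enat (g * s)" using gs by simp
  show ?thesis
  proof (intro conjI)
    show "let X = {u \<in> V. \<not> planar (nbhd V E T {u}) (induced E (nbhd V E T {u}))};
              N = nbhd V E (2 * \<rho>) X
          in \<forall>K \<in> components N (induced E N). weak_diam E K < enat (g * (2 * T + 4 * \<rho> + 1))"
      unfolding Let_def
    proof (intro ballI)
      fix K
      assume K: "K \<in> components (nbhd V E (2 * \<rho>) {u \<in> V. \<not> planar (nbhd V E T {u}) (induced E (nbhd V E T {u}))})
          (induced E (nbhd V E (2 * \<rho>) {u \<in> V. \<not> planar (nbhd V E T {u}) (induced E (nbhd V E T {u}))}))"
      have "weak_diam E K \<le> enat (g * s - 1)"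
        unfolding s_def by (rule diam_bound[OF assms(2) assms(3) assms(1) refl refl K])
      then show "weak_diam E K < enat (g * (2 * T + 4 * \<rho> + 1))" using lt unfolding s_def by (rule le_less_trans)
    qed
    show "\<exists>\<delta>::nat. \<delta> < g * (2 * T + 4 * \<rho> + 1) \<and>
            locally_nice T \<delta> \<rho> {(V', E'). sgraph V' E' \<and> euler_genus_le V' E' g}
                               {(V', E'). planar V' E'}"
    proof (intro exI conjI)
      show "g * s - 1 < g * (2 * T + 4 * \<rho> + 1)" using gs unfolding s_def by simp
      show "locally_nice T (g * s - 1) \<rho> {(V', E'). sgraph V' E' \<and> euler_genus_le V' E' g}
                               {(V', E'). planar V' E'}"
        unfolding locally_nice_def Let_def
        apply clarsimp
        subgoal premises p for a b K
        proof -
          have "weak_diam b K \<le> enat (g * (2 * T + 4 * \<rho> + 1) - 1)"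
            by (rule diam_bound[OF p(2) p(3) assms(1) _ refl p(1)]) simp
          then show ?thesis by (simp add: s_def)
        qed
        done
    qed
  qed
qed

end
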